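(* Let $S_1,S_2\subseteq\mathbb{F}_q$ with $\#S_1=\#S_2=s$, let $0\le i\le j<s$, and let $$L_1=\{N\in\Delta(s,s)\mid N\preceq_{\deg}X^iY^j\},\qquad L_2=\{N\in\Delta(s,s)\mid N\prec_{\deg}X^jY^i\}.$$ Then $C(L_1)$ and $C(L_2)$ have length $n=s^2$ and codimension $\ell=j-i+1$, and $$M_1(C(L_1),C(L_2))=(s-i)(s-j),\qquad M_1(C(L_2)^\perp,C(L_1)^\perp)\ge(i+1)(j+1),$$ and for $v=2,\dots,\ell$, $$M_v(C(L_1),C(L_2))=(s-i)(s-j)+\sum_{t=2}^v\big((s-i)-(t-1)\big)=(s-i)(s-j+v-1)-\frac{v(v-1)}{2},$$ $$M_v(C(L_2)^\perp,C(L_1)^\perp)\ge(i+1)(j+1)+\sum_{t=2}^v\big((j+1)-(t-1)\big)=(i+v)(j+1)-\frac{v(v-1)}{2}.$$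
   Context: $q$ is a prime power. $S_1\times S_2=\{\alpha_1,\dots,\alpha_n\}$, $n=s^2$. $\Delta(s,s)=\{X^aY^b\mid 0\le a,b<s\}$. For $L\subseteq\Delta(s,s)$, $C(L)\subseteq\mathbb{F}_q^n$ is the span of $(N(\alpha_1),\dots,N(\alpha_n))$, $N\in L$; $C^\perp$ is the Euclidean dual. $\prec_{\deg}$ is the degree lexicographic ordering: $X^aY^b\prec_{\deg}X^cY^d$ iff $a+b<c+d$, or $a+b=c+d$ and $b<d$. For linear codes $C_2\subsetneq C_1\subseteq\mathbb{F}_q^n$ and $1\le v\le\dim C_1-\dim C_2$, $M_v(C_1,C_2)=\min\{\#\mathrm{Supp}\,U\mid U\subseteq C_1\text{ subspace},\ \dim U=v,\ U\cap C_2=\{\vec0\}\}$, with $\mathrm{Supp}\,U$ the set of coordinates where some word of $U$ is nonzero. *)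

theory Defs
  imports Complex_Main "HOL-Library.Function_Algebras"
begin

text \<open>Monomials X^a Y^b are represented by exponent pairs (a,b).
  Coordinates are indexed by the evaluation points p in S1 x S2 (the order
  alpha_1..alpha_n of the points is irrelevant for dimensions and supports);
  a vector of F_q^n is a function on points that vanishes outside S1 x S2.\<close>

definition Delta :: "nat \<Rightarrow> (nat \<times> nat) set" where
  "Delta s = {..<s} \<times> {..<s}"

definition deglex_less :: "nat \<times> nat \<Rightarrow> nat \<times> nat \<Rightarrow> bool" where
  "deglex_less m m' = (fst m + snd m < fst m' + snd m' \<or>
      (fst m + snd m = fst m' + snd m' \<and> snd m < snd m'))"

definition deglex_le :: "nat \<times> nat \<Rightarrow> nat \<times> nat \<Rightarrow> bool" where
  "deglex_le m m' = (deglex_less m m' \<or> m = m')"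

definition vscale :: "'a::field \<Rightarrow> ('b \<Rightarrow> 'a) \<Rightarrow> ('b \<Rightarrow> 'a)" where
  "vscale c f = (\<lambda>x. c * f x)"

lemma vector_space_vscale: "vector_space (vscale :: 'a::field \<Rightarrow> ('b \<Rightarrow> 'a) \<Rightarrow> _)"
  by unfold_locales (auto simp: vscale_def algebra_simps fun_eq_iff)

definition evvec :: "('a::field \<times> 'a) set \<Rightarrow> nat \<times> nat \<Rightarrow> ('a \<times> 'a \<Rightarrow> 'a)" where
  "evvec P m = (\<lambda>p. if p \<in> P then fst p ^ fst m * snd p ^ snd m else 0)"

definition evcode :: "('a::field \<times> 'a) set \<Rightarrow> (nat \<times> nat) set \<Rightarrow> ('a \<times> 'a \<Rightarrow> 'a) set" where
  "evcode P L = module.span vscale (evvec P ` L)"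

definition dual_code :: "('a::field \<times> 'a) set \<Rightarrow> ('a \<times> 'a \<Rightarrow> 'a) set \<Rightarrow> ('a \<times> 'a \<Rightarrow> 'a) set" where
  "dual_code P C = {w. (\<forall>p. p \<notin> P \<longrightarrow> w p = 0) \<and> (\<forall>c\<in>C. (\<Sum>p\<in>P. c p * w p) = 0)}"

definition supp :: "('b \<Rightarrow> 'a::zero) set \<Rightarrow> 'b set" where
  "supp U = {x. \<exists>u\<in>U. u x \<noteq> 0}"

definition codim :: "('b \<Rightarrow> 'a::field) set \<Rightarrow> ('b \<Rightarrow> 'a) set \<Rightarrow> nat" where
  "codim C1 C2 = vector_space.dim vscale C1 - vector_space.dim vscale C2"

definition RGHW :: "nat \<Rightarrow> ('b \<Rightarrow> 'a::field) set \<Rightarrow> ('b \<Rightarrow> 'a) set \<Rightarrow> nat" where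
  "RGHW v C1 C2 = Min {card (supp U) | U. U \<subseteq> C1 \<and> module.subspace vscale U \<and>
       vector_space.dim vscale U = v \<and> U \<inter> C2 = {0}}"

end

theory Submission
  imports Defs
begin

interpretation VS: vector_space "vscale :: 'a::field \<Rightarrow> ('b \<Rightarrow> 'a) \<Rightarrow> ('b \<Rightarrow> 'a)"
  by (rule vector_space_vscale)

definition gN :: "(nat \<Rightarrow> 'a::comm_ring_1) \<Rightarrow> nat \<Rightarrow> 'a \<Rightarrow> 'a" where
  "gN xs a x = (\<Prod>t<a. x - xs t)"

lemma gN_zero: "k < a \<Longrightarrow> gN xs a (xs k) = 0"
  unfolding gN_def by (rule prod_zero) auto

lemma gN_nz:
  fixes xs :: "nat \<Rightarrow> 'a::field"
  assumes "inj_on xs {..<s}" "a \<le> k" "k < s"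
  shows "gN xs a (xs k) \<noteq> 0"
proof -
  have "\<forall>t\<in>{..<a}. xs k - xs t \<noteq> 0"
  proof
    fix t assume "t \<in> {..<a}"
    then have "t < s" "t \<noteq> k" using assms by auto
    then show "xs k - xs t \<noteq> 0" using assms inj_onD[OF assms(1), of k t] by auto
  qed
  then show ?thesis unfolding gN_def by (simp add: prod_zero_iff)
qed

lemma gN_Suc: "gN xs (Suc a) x = gN xs a x * (x - xs a)"
  unfolding gN_def by simp

lemma gN_mult: "x * gN xs a x = gN xs (Suc a) x + xs a * gN xs a x"
  unfolding gN_Suc by (simp add: algebra_simps)

function phi :: "(nat \<Rightarrow> 'a::field) \<Rightarrow> nat \<Rightarrow> nat \<Rightarrow> 'a" where
  "phi xs a k = (if a < k then 0 else if k = a then 1 / gN xs a (xs a)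
     else - (\<Sum>k'\<in>{k<..a}. gN xs k (xs k') * phi xs a k') / gN xs k (xs k))"
  by pat_completeness auto
termination by (relation "measure (\<lambda>(xs,a,k). a - k)") auto

declare phi.simps[simp del]

lemma phi_gt: "a < k \<Longrightarrow> phi xs a k = 0"
  by (simp add: phi.simps)

lemma phi_eq: "phi xs a a = 1 / gN xs a (xs a)"
  by (simp add: phi.simps)

lemma phi_lt: "k < a \<Longrightarrow> phi xs a k = - (\<Sum>k'\<in>{k<..a}. gN xs k (xs k') * phi xs a k') / gN xs k (xs k)"
  by (subst phi.simps) simp

lemma phi_dual:
  fixes xs :: "nat \<Rightarrow> 'a::field"
  assumes inj: "inj_on xs {..<s}" and as: "a < s"
  shows "(\<Sum>k<s. gN xs a' (xs k) * phi xs a k) = (if a' = a then 1 else 0)"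
proof -
  have "(\<Sum>k<s. gN xs a' (xs k) * phi xs a k) = (\<Sum>k\<in>{..a}. gN xs a' (xs k) * phi xs a k)"
    using as by (intro sum.mono_neutral_right) (auto simp: phi_gt)
  also have "\<dots> = (if a' = a then 1 else 0)"
  proof (cases "a < a'")
    case True then show ?thesis by (auto simp: gN_zero)
  next
    case False
    have "(\<Sum>k\<in>{..a}. gN xs a' (xs k) * phi xs a k) = (\<Sum>k\<in>{a'..a}. gN xs a' (xs k) * phi xs a k)"
      using False by (intro sum.mono_neutral_right) (auto simp: gN_zero)
    also have "{a'..a} = insert a' {a'<..a}" using False by auto
    also have "(\<Sum>k\<in>insert a' {a'<..a}. gN xs a' (xs k) * phi xs a k)
        = gN xs a' (xs a') * phi xs a a' + (\<Sum>k\<in>{a'<..a}. gN xs a' (xs k) * phi xs a k)"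
      by simp
    also have "\<dots> = (if a' = a then 1 else 0)"
    proof (cases "a' = a")
      case True
      have "gN xs a (xs a) \<noteq> 0" using gN_nz[OF inj, of a a] as by auto
      then show ?thesis using True by (simp add: phi_eq)
    next
      case F2: False
      then have lt: "a' < a" using False by auto
      have "gN xs a' (xs a') \<noteq> 0" using gN_nz[OF inj, of a' a'] as lt by auto
      then show ?thesis using F2 lt by (simp add: phi_lt)
    qed
    finally show ?thesis .
  qed
  finally show ?thesis .
qed

lemma gN_ge_zero: "s \<le> a \<Longrightarrow> k < s \<Longrightarrow> gN xs a (xs k) = 0"
  by (rule gN_zero) auto

lemma vec_inj:
  fixes xs :: "nat \<Rightarrow> 'a::field"
  assumes inj: "inj_on xs {..<s}"
    and h: "\<And>a'. a' < s \<Longrightarrow> (\<Sum>k<s. u k * gN xs a' (xs k)) = 0"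
  shows "k < s \<Longrightarrow> u k = 0"
proof (rule ccontr)
  assume k: "k < s" "u k \<noteq> 0"
  define m where "m = Max {k. k < s \<and> u k \<noteq> 0}"
  have fin: "finite {k. k < s \<and> u k \<noteq> 0}" by auto
  have mem: "m \<in> {k. k < s \<and> u k \<noteq> 0}" unfolding m_def using k fin by (intro Max_in) auto
  have big: "\<And>k'. k' < s \<Longrightarrow> m < k' \<Longrightarrow> u k' = 0"
    using fin unfolding m_def by (metis (mono_tags, lifting) Max_ge mem_Collect_eq not_le)
  have "(\<Sum>k<s. u k * gN xs m (xs k)) = (\<Sum>k\<in>{m}. u k * gN xs m (xs k))"
  proof (intro sum.mono_neutral_right ballI)
    fix i assume "i \<in> {..<s} - {m}"
    then have "i < m \<or> m < i" "i < s" by auto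
    then show "u i * gN xs m (xs i) = 0" using big gN_zero[of i m xs] by auto
  qed (use mem in auto)
  also have "\<dots> \<noteq> 0" using mem gN_nz[OF inj, of m m] by auto
  finally show False using h mem by auto
qed

lemma phi_mult:
  fixes xs :: "nat \<Rightarrow> 'a::field"
  assumes inj: "inj_on xs {..<s}" and as: "a < s" and ks: "k < s"
  shows "xs k * phi xs a k = (if a = 0 then 0 else phi xs (a - 1) k) + xs a * phi xs a k"
proof -
  define u where "u k = xs k * phi xs a k - ((if a = 0 then 0 else phi xs (a - 1) k) + xs a * phi xs a k)" for k
  have "u k = 0"
  proof (rule vec_inj[OF inj _ ks])
    fix a' assume a's: "a' < s"
    define A where "A k = (if a = 0 then 0 else gN xs a' (xs k) * phi xs (a - 1) k)" for k
    have t: "u k * gN xs a' (xs k) = gN xs (Suc a') (xs k) * phi xs a k + xs a' * (gN xs a' (xs k) * phi xs a k)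
        - (A k + xs a * (gN xs a' (xs k) * phi xs a k))" for k
    proof -
      have "xs k * phi xs a k * gN xs a' (xs k) = phi xs a k * (xs k * gN xs a' (xs k))" by (simp add: algebra_simps)
      also have "\<dots> = phi xs a k * (gN xs (Suc a') (xs k) + xs a' * gN xs a' (xs k))" by (simp only: gN_mult)
      finally show ?thesis unfolding u_def A_def by (simp add: algebra_simps)
    qed
    have sA: "(\<Sum>k<s. A k) = (if a = 0 then 0 else (if a' = a - 1 then 1 else 0))"
      unfolding A_def using phi_dual[OF inj, of "a - 1"] as by auto
    have "(\<Sum>k<s. u k * gN xs a' (xs k)) =
      (\<Sum>k<s. gN xs (Suc a') (xs k) * phi xs a k) + xs a' * (\<Sum>k<s. gN xs a' (xs k) * phi xs a k)
      - ((\<Sum>k<s. A k) + xs a * (\<Sum>k<s. gN xs a' (xs k) * phi xs a k))"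
      unfolding t by (simp add: sum_subtractf sum.distrib sum_distrib_left)
    also have "\<dots> = 0"
      unfolding sA using phi_dual[OF inj as] as by auto
    finally show "(\<Sum>k<s. u k * gN xs a' (xs k)) = 0" .
  qed
  then show ?thesis unfolding u_def by simp
qed


definition pr :: "'p set \<Rightarrow> ('p \<Rightarrow> 'a::field) \<Rightarrow> ('p \<Rightarrow> 'a) \<Rightarrow> 'a" where
  "pr P F G = (\<Sum>p\<in>P. F p * G p)"

lemma pr_add: "pr P (F + G) H = pr P F H + pr P G H"
  unfolding pr_def by (simp add: distrib_right sum.distrib)
lemma pr_diff: "pr P (F - G) H = pr P F H - pr P G H"
  unfolding pr_def by (simp add: left_diff_distrib sum_subtractf)
lemma pr_scale: "pr P (vscale c F) H = c * pr P F H"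
  unfolding pr_def vscale_def by (simp add: sum_distrib_left mult.assoc)
lemma pr_zero[simp]: "pr P 0 H = 0"
  unfolding pr_def by simp
lemma sum_fun_apply: "(\<Sum>x\<in>A. f x) p = (\<Sum>x\<in>A. f x p)"
  by (induct A rule: infinite_finite_induct) auto

lemma pr_sum: "pr P (\<Sum>x\<in>A. f x) H = (\<Sum>x\<in>A. pr P (f x) H)"
  unfolding pr_def sum_fun_apply sum_distrib_right by (rule sum.swap)

lemma pr_comm: "pr P F G = pr P G F"
  unfolding pr_def by (simp add: mult.commute)
lemma pr_mult_move: "pr P (\<lambda>p. m p * F p) G = pr P F (\<lambda>p. m p * G p)"
  unfolding pr_def by (simp add: algebra_simps)

lemma pr_span_zero:
  assumes "x \<in> VS.span S" "\<And>y. y \<in> S \<Longrightarrow> pr P y H = 0"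
  shows "pr P x H = 0"
  using assms(1)
proof (induct rule: VS.span_induct_alt)
  case base then show ?case by (simp only: pr_zero)
next
  case (step c x y)
  have "pr P (\<lambda>a. vscale c x a + y a) H = c * pr P x H + pr P y H"
    unfolding pr_def vscale_def by (simp add: distrib_right sum.distrib sum_distrib_left mult.assoc)
  then show ?case using step assms(2) by simp
qed

locale grid =
  fixes S1 S2 :: "'a::{finite,field} set" and s :: nat and xs ys :: "nat \<Rightarrow> 'a"
  assumes bx: "bij_betw xs {..<s} S1" and bY: "bij_betw ys {..<s} S2"
begin

definition "P = S1 \<times> S2"
definition "ix = the_inv_into {..<s} xs"
definition "iy = the_inv_into {..<s} ys"

definition E :: "nat \<times> nat \<Rightarrow> ('a \<times> 'a \<Rightarrow> 'a)" where
  "E N = (\<lambda>p. if p \<in> P then gN xs (fst N) (fst p) * gN ys (snd N) (snd p) else 0)"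

definition Phi :: "nat \<times> nat \<Rightarrow> ('a \<times> 'a \<Rightarrow> 'a)" where
  "Phi N = (\<lambda>p. if p \<in> P then phi xs (fst N) (ix (fst p)) * phi ys (snd N) (iy (snd p)) else 0)"

lemma injx: "inj_on xs {..<s}" using bx bij_betw_def by blast
lemma injy: "inj_on ys {..<s}" using bY bij_betw_def by blast

lemma ix_xs: "k < s \<Longrightarrow> ix (xs k) = k"
  unfolding ix_def using injx by (simp add: the_inv_into_f_f)
lemma iy_ys: "k < s \<Longrightarrow> iy (ys k) = k"
  unfolding iy_def using injy by (simp add: the_inv_into_f_f)

lemma S1_elem: "x \<in> S1 \<Longrightarrow> ix x < s \<and> xs (ix x) = x"
  unfolding ix_def using bx
  by (metis bij_betwE bij_betw_imp_inj_on bij_betw_imp_surj_on f_the_inv_into_f lessThan_iff the_inv_into_into subset_refl)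
lemma S2_elem: "y \<in> S2 \<Longrightarrow> iy y < s \<and> ys (iy y) = y"
  unfolding iy_def using bY
  by (metis bij_betwE bij_betw_imp_inj_on bij_betw_imp_surj_on f_the_inv_into_f lessThan_iff the_inv_into_into subset_refl)

lemma sumS1: "(\<Sum>x\<in>S1. f x) = (\<Sum>k<s. f (xs k))"
  using sum.reindex_bij_betw[OF bx, of f] by simp
lemma sumS2: "(\<Sum>y\<in>S2. f y) = (\<Sum>k<s. f (ys k))"
  using sum.reindex_bij_betw[OF bY, of f] by simp

lemma finP: "finite P" by simp

lemma pr_E_Phi:
  assumes "fst N < s" "snd N < s"
  shows "pr P (E M) (Phi N) = (if M = N then 1 else 0)"
proof -
  have "pr P (E M) (Phi N) = (\<Sum>p\<in>S1 \<times> S2. (gN xs (fst M) (fst p) * phi xs (fst N) (ix (fst p))) *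
          (gN ys (snd M) (snd p) * phi ys (snd N) (iy (snd p))))"
    unfolding pr_def E_def Phi_def P_def by (intro sum.cong) (auto simp: algebra_simps)
  also have "\<dots> = (\<Sum>x\<in>S1. gN xs (fst M) x * phi xs (fst N) (ix x)) * (\<Sum>y\<in>S2. gN ys (snd M) y * phi ys (snd N) (iy y))"
    by (simp add: sum_product sum.cartesian_product split_def)
  also have "\<dots> = (\<Sum>k<s. gN xs (fst M) (xs k) * phi xs (fst N) k) * (\<Sum>k<s. gN ys (snd M) (ys k) * phi ys (snd N) k)"
    unfolding sumS1 sumS2 by (simp add: ix_xs iy_ys)
  also have "\<dots> = (if M = N then 1 else 0)"
    using phi_dual[OF injx assms(1)] phi_dual[OF injy assms(2)] by (auto simp: prod_eq_iff)
  finally show ?thesis .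
qed

definition "xmul F = (\<lambda>p. fst p * F p)"
definition "ymul F = (\<lambda>p. snd p * F p)"

lemma E_xmul: "xmul (E (a, b)) = E (Suc a, b) + vscale (xs a) (E (a, b))"
  unfolding xmul_def E_def vscale_def by (auto simp: fun_eq_iff gN_Suc algebra_simps)
lemma E_ymul: "ymul (E (a, b)) = E (a, Suc b) + vscale (ys b) (E (a, b))"
  unfolding ymul_def E_def vscale_def by (auto simp: fun_eq_iff gN_Suc algebra_simps)

lemma E_bigx: "s \<le> a \<Longrightarrow> E (a, b) = 0"
  unfolding E_def P_def by (auto simp: fun_eq_iff dest!: S1_elem) (metis gN_zero order_less_le_trans)
lemma E_bigy: "s \<le> b \<Longrightarrow> E (a, b) = 0"
  unfolding E_def P_def by (auto simp: fun_eq_iff dest!: S2_elem) (metis gN_zero order_less_le_trans)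

end

definition isLead :: "'p set \<Rightarrow> ('n \<Rightarrow> 'p \<Rightarrow> 'a::field) \<Rightarrow> 'n set \<Rightarrow> ('n \<Rightarrow> nat) \<Rightarrow> ('p \<Rightarrow> 'a) \<Rightarrow> 'n \<Rightarrow> bool" where
  "isLead P Psi I r F N \<longleftrightarrow> N \<in> I \<and> pr P F (Psi N) \<noteq> 0 \<and> (\<forall>N'\<in>I. r N' < r N \<longrightarrow> pr P F (Psi N') = 0)"

lemma lead_unique:
  assumes "inj_on r I" "isLead P Psi I r F N" "isLead P Psi I r F N'"
  shows "N = N'"
proof (rule ccontr)
  assume ne: "N \<noteq> N'"
  have "r N \<noteq> r N'" using assms(1) ne assms(2,3) unfolding isLead_def by (meson inj_on_eq_iff)
  then have "r N < r N' \<or> r N' < r N" by auto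
  then show False using assms(2,3) unfolding isLead_def by auto
qed

lemma exists_min_r:
  fixes r :: "'z \<Rightarrow> nat"
  assumes "finite Z" "Z \<noteq> {}"
  obtains z where "z \<in> Z" "\<And>z'. z' \<in> Z \<Longrightarrow> r z \<le> r z'"
proof -
  have "Min (r ` Z) \<in> r ` Z" using assms by (intro Min_in) auto
  then obtain z where "z \<in> Z" "r z = Min (r ` Z)" by auto
  moreover have "\<And>z'. z' \<in> Z \<Longrightarrow> Min (r ` Z) \<le> r z'" using assms by (intro Min_le) auto
  ultimately show ?thesis using that by auto
qed

lemma nonzero_has_lead:
  assumes "finite I" "N \<in> I" "pr P F (Psi N) \<noteq> 0"
  obtains N0 where "isLead P Psi I r F N0" "r N0 \<le> r N"
proof -
  let ?Z = "{N\<in>I. pr P F (Psi N) \<noteq> 0}"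
  obtain z where z: "z \<in> ?Z" "\<And>z'. z' \<in> ?Z \<Longrightarrow> r z \<le> r z'"
    using exists_min_r[of ?Z r] assms by auto
  have "isLead P Psi I r F z" unfolding isLead_def using z by force
  moreover have "r z \<le> r N" using z assms by auto
  ultimately show ?thesis using that by blast
qed

definition "delta p = (\<lambda>q. if q = p then (1::'a::field) else 0)"

lemma supported_in_span:
  fixes F :: "'p \<Rightarrow> 'a::field"
  assumes "finite T" "\<forall>p. p \<notin> T \<longrightarrow> F p = 0"
  shows "F \<in> VS.span (delta ` T)"
proof -
  have "F = (\<Sum>p\<in>T. vscale (F p) (delta p))"
  proof
    fix q
    show "F q = (\<Sum>p\<in>T. vscale (F p) (delta p)) q"
      unfolding sum_fun_apply vscale_def delta_def using assms
      by (cases "q \<in> T") (auto simp: if_distrib cong: if_cong)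
  qed
  also have "\<dots> \<in> VS.span (delta ` T)"
    by (intro VS.span_sum VS.span_scale VS.span_base) auto
  finally show ?thesis .
qed

lemma leads_card_le:
  fixes Psi :: "'n \<Rightarrow> 'p \<Rightarrow> 'a::field"
  assumes finT: "finite T" and finI: "finite I" and injr: "inj_on r I"
  shows "card {N. \<exists>F. (\<forall>p. p \<notin> T \<longrightarrow> F p = 0) \<and> isLead P Psi I r F N} \<le> card T"
proof -
  define D where "D = {N. \<exists>F. (\<forall>p. p \<notin> T \<longrightarrow> F p = 0) \<and> isLead P Psi I r F N}"
  define rep where "rep N = (SOME F. (\<forall>p. p \<notin> T \<longrightarrow> F p = 0) \<and> isLead P Psi I r F N)" for N
  have rep: "(\<forall>p. p \<notin> T \<longrightarrow> rep N p = 0) \<and> isLead P Psi I r (rep N) N" if "N \<in> D" for N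
    using that unfolding D_def rep_def by (metis (mono_tags, lifting) mem_Collect_eq someI_ex)
  have DI: "D \<subseteq> I" unfolding D_def isLead_def by auto
  then have finD: "finite D" using finI finite_subset by blast
  have inj: "inj_on rep D"
  proof (rule inj_onI)
    fix N N' assume "N \<in> D" "N' \<in> D" "rep N = rep N'"
    then show "N = N'" using rep lead_unique[OF injr] by metis
  qed
  have indep: "VS.independent (rep ` D)"
  proof (rule VS.independent_if_scalars_zero)
    show "finite (rep ` D)" using finD by simp
  next
    fix f and x :: "'p \<Rightarrow> 'a" assume sum0: "(\<Sum>x\<in>rep ` D. vscale (f x) x) = 0" and x: "x \<in> rep ` D"
    have sum0': "(\<Sum>N\<in>D. vscale (f (rep N)) (rep N)) = 0"
      using sum0 sum.reindex[OF inj, of "\<lambda>x. vscale (f x) x"] by simp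
    show "f x = 0"
    proof (rule ccontr)
      assume fx: "f x \<noteq> 0"
      let ?Z = "{N\<in>D. f (rep N) \<noteq> 0}"
      have "?Z \<noteq> {}" using x fx by auto
      then obtain N0 where N0: "N0 \<in> ?Z" "\<And>N. N \<in> ?Z \<Longrightarrow> r N0 \<le> r N"
        using exists_min_r[of ?Z r] finD by auto
      have "pr P (\<Sum>N\<in>D. vscale (f (rep N)) (rep N)) (Psi N0) = (\<Sum>N\<in>D. f (rep N) * pr P (rep N) (Psi N0))"
        by (simp add: pr_sum pr_scale)
      also have "\<dots> = (\<Sum>N\<in>{N0}. f (rep N) * pr P (rep N) (Psi N0))"
      proof (intro sum.mono_neutral_right ballI)
        fix N assume N: "N \<in> D - {N0}"
        show "f (rep N) * pr P (rep N) (Psi N0) = 0"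
        proof (cases "f (rep N) = 0")
          case False
          then have "r N0 \<le> r N" using N N0 by auto
          moreover have "r N0 \<noteq> r N"
          proof
            assume "r N0 = r N"
            moreover have "N0 \<in> I" "N \<in> I" "N \<noteq> N0" using N N0(1) DI by auto
            ultimately show False using injr by (simp add: inj_on_eq_iff)
          qed
          ultimately have "r N0 < r N" by auto
          then show ?thesis using rep[of N] N N0 DI unfolding isLead_def by auto
        qed simp
      qed (use finD N0 in auto)
      also have "\<dots> \<noteq> 0" using N0 rep[of N0] unfolding isLead_def by auto
      finally show False using sum0' by simp
    qed
  qed
  have "rep ` D \<subseteq> VS.span (delta ` T)"
    using rep supported_in_span[OF finT] by blast
  then have "card (rep ` D) \<le> card (delta ` T :: ('p \<Rightarrow> 'a) set)"
    using VS.independent_span_bound[OF finite_imageI[OF finT, of delta] indep] by simp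
  also have "\<dots> \<le> card T" using finT card_image_le by blast
  finally show ?thesis using card_image[OF inj] unfolding D_def by simp
qed

lemma dim_le_leads:
  fixes Psi :: "'n \<Rightarrow> 'p \<Rightarrow> 'a::field"
  assumes finI: "finite I" and injr: "inj_on r I" and sub: "VS.subspace U"
    and nd: "\<And>F. F \<in> U \<Longrightarrow> F \<noteq> 0 \<Longrightarrow> \<exists>N\<in>I. pr P F (Psi N) \<noteq> 0"
  shows "VS.dim U \<le> card {N. \<exists>F\<in>U. isLead P Psi I r F N}"
proof -
  define D where "D = {N. \<exists>F\<in>U. isLead P Psi I r F N}"
  define rep where "rep N = (SOME F. F \<in> U \<and> isLead P Psi I r F N)" for N
  have rep: "rep N \<in> U \<and> isLead P Psi I r (rep N) N" if "N \<in> D" for N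
    using that unfolding D_def rep_def by (metis (mono_tags, lifting) mem_Collect_eq someI_ex)
  have DI: "D \<subseteq> I" unfolding D_def isLead_def by auto
  then have finD: "finite D" using finI finite_subset by blast
  define Z where "Z F = {N\<in>I. \<forall>N'\<in>I. r N' \<le> r N \<longrightarrow> pr P F (Psi N') = 0}" for F
  have main: "F \<in> VS.span (rep ` D)" if "F \<in> U" for F
    using that
  proof (induct "card I - card (Z F)" arbitrary: F rule: less_induct)
    case (less F)
    show ?case
    proof (cases "\<forall>N\<in>I. pr P F (Psi N) = 0")
      case True
      then have "F = 0" using nd less(2) by blast
      then show ?thesis by (simp add: VS.span_zero)
    next
      case False
      then obtain N1 where "N1 \<in> I" "pr P F (Psi N1) \<noteq> 0" by auto
      then obtain N0 where lead: "isLead P Psi I r F N0"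
        using nonzero_has_lead[OF finI] by metis
      then have N0D: "N0 \<in> D" using less(2) unfolding D_def by auto
      define G where "G = rep N0"
      have G: "G \<in> U" "isLead P Psi I r G N0" using rep[OF N0D] unfolding G_def by auto
      define c where "c = pr P F (Psi N0) / pr P G (Psi N0)"
      define F' where "F' = F - vscale c G"
      have F'U: "F' \<in> U" unfolding F'_def using sub G less(2)
        by (intro VS.subspace_diff VS.subspace_scale) auto
      have prF': "pr P F' H = pr P F H - c * pr P G H" for H
        unfolding F'_def by (simp add: pr_diff pr_scale)
      have ZF: "Z F \<subseteq> Z F'"
      proof
        fix N assume N: "N \<in> Z F"
        have "r N < r N0"
        proof (rule ccontr)
          assume "\<not> r N < r N0"
          then have "r N0 \<le> r N" by auto
          then show False using N lead unfolding Z_def isLead_def by auto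
        qed
        then show "N \<in> Z F'" using N G(2) unfolding Z_def isLead_def prF' by auto
      qed
      have N0Z: "N0 \<in> Z F'"
        unfolding Z_def
      proof (intro CollectI conjI ballI impI)
        show "N0 \<in> I" using lead unfolding isLead_def by auto
        fix N' assume N': "N' \<in> I" "r N' \<le> r N0"
        show "pr P F' (Psi N') = 0"
        proof (cases "r N' < r N0")
          case True
          then show ?thesis using N' lead G(2) unfolding isLead_def prF' by auto
        next
          case False
          then have "N' = N0" using N' injr lead unfolding isLead_def by (meson inj_onD le_neq_implies_less)
          then show ?thesis unfolding prF' c_def using G(2) unfolding isLead_def by auto
        qed
      qed
      have N0nZ: "N0 \<notin> Z F" using lead unfolding Z_def isLead_def by auto
      have "Z F \<subset> Z F'" using ZF N0Z N0nZ by auto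
      moreover have "Z F' \<subseteq> I" unfolding Z_def by auto
      ultimately have "card (Z F) < card (Z F')" "card (Z F') \<le> card I"
        using finI by (auto intro: psubset_card_mono card_mono finite_subset)
      then have "card I - card (Z F') < card I - card (Z F)" by auto
      then have "F' \<in> VS.span (rep ` D)" using less(1) F'U by blast
      moreover have "G \<in> VS.span (rep ` D)" unfolding G_def using N0D by (intro VS.span_base) auto
      ultimately have "F' + vscale c G \<in> VS.span (rep ` D)"
        by (intro VS.span_add VS.span_scale)
      then show ?thesis unfolding F'_def by simp
    qed
  qed
  have "VS.dim U \<le> card (rep ` D)"
    using main finD by (intro VS.dim_le_card) auto
  also have "\<dots> \<le> card D" using finD card_image_le by blast
  finally show ?thesis unfolding D_def .
qed


fun tri :: "nat \<Rightarrow> nat" where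
  "tri 0 = 0" | "tri (Suc n) = tri n + Suc n"

lemma tri_add: "tri (a + b) = tri a + tri b + a * b"
  by (induct b) (auto simp: algebra_simps)

lemma tri_mono: "a \<le> b \<Longrightarrow> tri a \<le> tri b"
  using tri_add[of a "b - a"] by simp

lemma tri_formula: "tri n = n * (n + 1) div 2"
  by (induct n) (auto simp: algebra_simps)

definition rank :: "nat \<times> nat \<Rightarrow> nat" where
  "rank N = tri (fst N + snd N) + snd N"

lemma rank_lt_sum: "fst N + snd N < fst M + snd M \<Longrightarrow> rank N < rank M"
proof -
  assume h: "fst N + snd N < fst M + snd M"
  have "rank N \<le> tri (fst N + snd N) + (fst N + snd N)" unfolding rank_def by simp
  also have "\<dots> < tri (Suc (fst N + snd N))" by simp
  also have "\<dots> \<le> tri (fst M + snd M)" using h by (intro tri_mono) simp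
  also have "\<dots> \<le> rank M" unfolding rank_def by simp
  finally show ?thesis .
qed

lemma deglex_rank: "deglex_less N M \<longleftrightarrow> rank N < rank M"
proof
  assume "deglex_less N M"
  then consider "fst N + snd N < fst M + snd M" | "fst N + snd N = fst M + snd M" "snd N < snd M"
    unfolding deglex_less_def by auto
  then show "rank N < rank M"
  proof cases
    case 1 then show ?thesis by (rule rank_lt_sum)
  next
    case 2 then show ?thesis unfolding rank_def by simp
  qed
next
  assume h: "rank N < rank M"
  consider "fst N + snd N < fst M + snd M" | "fst N + snd N = fst M + snd M" | "fst M + snd M < fst N + snd N"
    by linarith
  then show "deglex_less N M"
  proof cases
    case 2 then show ?thesis using h unfolding deglex_less_def rank_def by auto
  next
    case 3 then show ?thesis using h rank_lt_sum[of M N] by auto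
  qed (auto simp: deglex_less_def)
qed

lemma deglex_le_rank: "deglex_le N M \<longleftrightarrow> rank N \<le> rank M"
proof -
  have inj: "rank N = rank M \<Longrightarrow> N = M"
  proof -
    assume e: "rank N = rank M"
    have "fst N + snd N = fst M + snd M"
      using rank_lt_sum[of N M] rank_lt_sum[of M N] e by (metis less_irrefl linorder_neqE_nat)
    then show "N = M" using e unfolding rank_def by (simp add: prod_eq_iff)
  qed
  show ?thesis unfolding deglex_le_def deglex_rank
  proof
    assume "rank N \<le> rank M"
    then have "rank N < rank M \<or> rank N = rank M" by auto
    then show "rank N < rank M \<or> N = M" using inj by auto
  qed auto
qed

lemma rank_inj: "inj rank"
  by (rule injI) (metis deglex_le_rank deglex_le_def deglex_rank order_less_irrefl le_antisym)

(* down-closure of antidiagonal points (d-b,b) *)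
definition downB :: "nat \<Rightarrow> nat set \<Rightarrow> (nat \<times> nat) set" where
  "downB d B = {(k, m). \<exists>b\<in>B. k + b \<le> d \<and> m \<le> b}"

lemma downB_sub: "downB d B \<subseteq> {..d} \<times> {..d}"
  unfolding downB_def by auto

lemma finite_downB: "finite (downB d B)"
  using downB_sub finite_subset by blast

lemma downB_mono: "B \<subseteq> B' \<Longrightarrow> downB d B \<subseteq> downB d B'"
  unfolding downB_def by auto

lemma card_downB_single: "m \<le> d \<Longrightarrow> card (downB d {m}) = (d - m + 1) * (m + 1)"
proof -
  assume "m \<le> d"
  have "downB d {m} = {..d - m} \<times> {..m}" unfolding downB_def using \<open>m \<le> d\<close> by auto
  then show ?thesis by (simp add: card_cartesian_product)
qed

lemma downB_main:
  assumes "finite B" "B \<noteq> {}" "\<forall>b\<in>B. b \<le> d"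
  shows "tri (d + 1) \<le> card (downB d B) + tri (Min B) + tri (d + 1 - card B - Min B)"
  using assms
proof (induct "card B" arbitrary: B rule: less_induct)
  case (less B)
  define m where "m = Min B"
  have mB: "m \<in> B" unfolding m_def using less by auto
  have mle: "\<forall>b\<in>B. m \<le> b" unfolding m_def using less by auto
  have md: "m \<le> d" using mB less by auto
  show ?case
  proof (cases "B = {m}")
    case True
    obtain e where e: "d = m + e" using md le_Suc_ex by blast
    have "card (downB d B) = (e + 1) * (m + 1)" using True card_downB_single[OF md] e by simp
    moreover have "tri (d + 1) = tri (m + 1) + tri e + (m + 1) * e" using tri_add[of "m+1" e] e by (simp add: algebra_simps)
    ultimately show ?thesis using True e unfolding m_def[symmetric] by (simp add: algebra_simps)
  next
    case False
    define B' where "B' = B - {m}"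
    have B'ne: "B' \<noteq> {}" using False mB unfolding B'_def by auto
    have finB': "finite B'" using less unfolding B'_def by auto
    have cB': "card B' = card B - 1" using mB less unfolding B'_def by auto
    have cB: "card B \<ge> 2" using False mB less
      by (metis B'ne One_nat_def Suc_1 Suc_leI card_0_eq cB' diff_is_0_eq finB' not_less_eq_eq)
    define m2 where "m2 = Min B'"
    have m2B': "m2 \<in> B'" unfolding m2_def using finB' B'ne by auto
    have m2le: "\<forall>b\<in>B'. m2 \<le> b" unfolding m2_def using finB' by auto
    have mm2: "m < m2" using m2B' mle unfolding B'_def by force
    have m2d: "m2 \<le> d" using m2B' less unfolding B'_def by auto
    have IH: "tri (d + 1) \<le> card (downB d B') + tri m2 + tri (d + 1 - card B' - m2)"
      unfolding m2_def using less(1)[of B'] cB' cB B'ne finB' less(4) unfolding B'_def by auto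
    define R where "R = {d - m2 + 1 .. d - m} \<times> {..m}"
    have cR: "card R = (m2 - m) * (m + 1)" unfolding R_def using mm2 m2d by (simp add: card_cartesian_product)
    have RB: "R \<subseteq> downB d B"
    proof
      fix p assume "p \<in> R"
      then have "fst p + m \<le> d" "snd p \<le> m" unfolding R_def using md by auto
      then show "p \<in> downB d B" unfolding downB_def using mB by (cases p) auto
    qed
    have RB': "R \<inter> downB d B' = {}"
    proof -
      { fix k x assume "(k, x) \<in> R" "(k, x) \<in> downB d B'"
        then obtain b where "b \<in> B'" "k + b \<le> d" "d - m2 + 1 \<le> k" unfolding R_def downB_def by auto
        then have False using m2le m2d by force }
      then show ?thesis by auto
    qed
    have B'B: "downB d B' \<subseteq> downB d B" by (rule downB_mono) (auto simp: B'_def)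
    have "card (downB d B') + card R = card (downB d B' \<union> R)"
      using RB' by (simp add: card_Un_disjoint finite_downB R_def inf_commute)
    also have "\<dots> \<le> card (downB d B)" using RB B'B by (intro card_mono finite_downB) auto
    finally have cdB: "card (downB d B') + (m2 - m) * (m + 1) \<le> card (downB d B)" using cR by simp
    have "B' \<subseteq> {m2..d}" using m2le less(4) unfolding B'_def by auto
    then have "card B' \<le> d + 1 - m2" using card_mono[of "{m2..d}" B'] by simp
    define e where "e = d + 1 - card B' - m2"
    have e: "d + 1 = card B' + m2 + e" unfolding e_def using m2d \<open>card B' \<le> d + 1 - m2\<close> by arith
    obtain g where g: "m2 = m + Suc g" using mm2 less_iff_Suc_add by auto
    have c: "card B = card B' + 1" using cB' cB by simp
    have t1: "tri (m + Suc g) = tri m + tri (Suc g) + m * Suc g" by (rule tri_add)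
    have t2: "tri (e + g) = tri e + tri g + e * g" by (rule tri_add)
    have ea: "d + 1 - card B' - m2 = e" using e by simp
    have eb: "d + 1 - card B - m = e + g" using e c g by simp
    have IH': "tri (d+1) \<le> card (downB d B') + tri m2 + tri e" using IH ea by simp
    have cdB': "card (downB d B') + (Suc g * m + Suc g) \<le> card (downB d B)" using cdB g by (simp add: algebra_simps)
    have t1': "tri m2 = tri m + tri g + Suc g + Suc g * m" using t1 g by (simp add: algebra_simps)
    have "tri (d+1) \<le> card (downB d B) + tri m + tri (e + g)" using IH' cdB' t1' t2 by linarith
    then show ?thesis unfolding m_def[symmetric] eb .
  qed
qed

lemma tri_convex:
  assumes "i \<le> m" "i \<le> S - m" "m \<le> S"
  shows "tri m + tri (S - m) \<le> tri i + tri (S - i)"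
proof -
  obtain u where u: "m = i + u" using assms le_Suc_ex by blast
  obtain w where w: "S - m = i + w" using assms le_Suc_ex by blast
  have "S - i = (i + w) + u" using u w assms by simp
  then have "tri (S - i) = tri (i + w) + tri u + (i + w) * u" using tri_add by simp
  moreover have "tri m = tri i + tri u + i * u" using u tri_add by simp
  ultimately show ?thesis using w by (simp add: algebra_simps)
qed

lemma downB_bound:
  assumes "B \<subseteq> {i..j}" "card B = v" "v \<ge> 1"
  shows "(i + v) * (j + 1) - tri (v - 1) \<le> card (downB (i + j) B)"
proof -
  have finB: "finite B" using assms finite_subset by blast
  have Bne: "B \<noteq> {}" using assms by auto
  define m where "m = Min B"
  have mB: "m \<in> B" unfolding m_def using finB Bne by auto
  have mle: "\<forall>b\<in>B. m \<le> b" unfolding m_def using finB by auto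
  have im: "i \<le> m" using mB assms by auto
  have "B \<subseteq> {m..j}" using mle assms by auto
  then have vle: "v \<le> j + 1 - m" using card_mono[of "{m..j}" B] assms by simp
  have mj: "m \<le> j" using mB assms by auto
  have main: "tri (i + j + 1) \<le> card (downB (i + j) B) + tri m + tri (i + j + 1 - v - m)"
  proof -
    have "\<forall>b\<in>B. b \<le> i + j" using assms(1) by auto
    from downB_main[OF finB Bne this] show ?thesis unfolding m_def assms(2) by simp
  qed
  have conv: "tri m + tri (i + j + 1 - v - m) \<le> tri i + tri (j + 1 - v)"
  proof -
    have h1: "i \<le> i + j + 1 - v - m" "m \<le> i + j + 1 - v" using vle mj im by arith+
    have h2: "i + j + 1 - v - i = j + 1 - v" by arith
    show ?thesis using tri_convex[OF im h1(1) h1(2)] unfolding h2 by simp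
  qed
  define k where "k = j + 1 - v"
  have k: "j + 1 = k + v" unfolding k_def using vle mj by arith
  obtain v' where v': "v = Suc v'" using assms by (cases v) auto
  have e1: "tri (i + j + 1) = tri i + tri (k + v) + i * (k + v)"
  proof -
    have "i + j + 1 = i + (k + v)" using k by simp
    then show ?thesis using tri_add[of i "k+v"] by (simp only:)
  qed
  have e2: "tri (k + v) = tri k + tri v + k * v" by (rule tri_add)
  have e3: "j + 1 - v = k" using k by simp
  have e4: "tri v = tri v' + v" using v' by simp
  have tv: "2 * tri v' = v' * v' + v'" by (induct v') (auto simp: algebra_simps)
  have X: "(i + v) * (j + 1) = (i + v) * (k + v)" using k by simp
  have c1: "tri (i + j + 1) \<le> card (downB (i + j) B) + tri i + tri k" using main conv unfolding e3 by linarith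
  have "(i + v) * (j + 1) \<le> card (downB (i + j) B) + tri (v - 1)"
  proof -
    have jk: "j = k + v'" using k v' by simp
    show ?thesis using c1 e1 e2 e4 tv unfolding X v' unfolding jk by (simp add: algebra_simps)
  qed
  then show ?thesis by linarith
qed


definition upB :: "nat \<Rightarrow> nat \<Rightarrow> nat set \<Rightarrow> (nat \<times> nat) set" where
  "upB s d B = {(k, m). k < s \<and> m < s \<and> (\<exists>b\<in>B. d \<le> k + b \<and> b \<le> m)}"

lemma finite_upB: "finite (upB s d B)"
  by (rule finite_subset[of _ "{..<s} \<times> {..<s}"]) (auto simp: upB_def)

lemma upB_bound:
  assumes B: "B \<subseteq> {i..j}" and cB: "card B = v" and v1: "v \<ge> 1" and js: "j < s" and ij: "i \<le> j"
  shows "(s - i) * (s - j + v - 1) - tri (v - 1) \<le> card (upB s (i + j) B)"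
proof -
  define B' where "B' = (\<lambda>b. s - 1 - b) ` B"
  have inj: "inj_on (\<lambda>b. s - 1 - b) B"
  proof (rule inj_onI)
    fix x y assume xy: "x \<in> B" "y \<in> B" "s - 1 - x = s - 1 - y"
    then have "x < s" "y < s" using B js by auto
    then show "x = y" using xy(3) by arith
  qed
  have cB': "card B' = v" unfolding B'_def using card_image[OF inj] cB by simp
  have B'sub: "B' \<subseteq> {s - 1 - j .. s - 1 - i}"
  proof
    fix y assume "y \<in> B'"
    then obtain b where b: "b \<in> B" "y = s - 1 - b" unfolding B'_def by auto
    then have "i \<le> b" "b \<le> j" using B by auto
    then show "y \<in> {s - 1 - j .. s - 1 - i}" using b js by auto
  qed
  have db: "(s - 1 - j + v) * (s - 1 - i + 1) - tri (v - 1) \<le> card (downB (s - 1 - j + (s - 1 - i)) B')"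
    by (rule downB_bound[OF B'sub cB' v1])
  have e1: "s - 1 - j + v = s - j + v - 1" "s - 1 - i + 1 = s - i" using js ij v1 by auto
  let ?f = "\<lambda>(k, m). (s - 1 - k, s - 1 - m)"
  let ?d = "s - 1 - j + (s - 1 - i)"
  have injf: "inj_on ?f (downB ?d B')"
  proof (rule inj_onI)
    fix p q assume p: "p \<in> downB ?d B'" and q: "q \<in> downB ?d B'" and e: "?f p = ?f q"
    have bnd: "fst x < s \<and> snd x < s" if xin: "x \<in> downB ?d B'" for x
    proof -
      obtain b where "b \<in> B'" "fst x + b \<le> ?d" "snd x \<le> b" using xin unfolding downB_def by (cases x) auto
      moreover have "b \<le> s - 1 - i" "s - 1 - j \<le> b" using calculation B'sub by auto
      ultimately show ?thesis using js by auto
    qed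
    show "p = q" using bnd[OF p] bnd[OF q] e by (cases p, cases q) auto
  qed
  have img: "?f ` downB ?d B' \<subseteq> upB s (i + j) B"
  proof
    fix y assume "y \<in> ?f ` downB ?d B'"
    then obtain k m where km: "(k, m) \<in> downB ?d B'" "y = (s - 1 - k, s - 1 - m)" by auto
    then obtain b' where b': "b' \<in> B'" "k + b' \<le> ?d" "m \<le> b'" unfolding downB_def by auto
    then obtain b where b: "b \<in> B" "b' = s - 1 - b" unfolding B'_def by auto
    have "i \<le> b" "b \<le> j" using b B by auto
    then have "s - 1 - k < s \<and> s - 1 - m < s \<and> i + j \<le> (s - 1 - k) + b \<and> b \<le> s - 1 - m"
      using b' b js by auto
    then show "y \<in> upB s (i + j) B" unfolding upB_def using km b by auto
  qed
  have "card (downB ?d B') \<le> card (upB s (i + j) B)"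
    using card_inj_on_le[OF injf img finite_upB] .
  then show ?thesis using db unfolding e1 by (simp add: mult.commute)
qed

definition Qset :: "nat \<Rightarrow> nat \<Rightarrow> nat \<Rightarrow> nat \<Rightarrow> (nat \<times> nat) set" where
  "Qset s i j v = {(k, m). k < s \<and> m < s \<and> (\<exists>u<v. i + u \<le> k \<and> j - u \<le> m)}"

lemma Qset_card:
  assumes "1 \<le> v" "v \<le> j - i + 1" "i \<le> j" "j < s"
  shows "card (Qset s i j v) \<le> (s - i) * (s - j) + (\<Sum>t=2..v. (s - i) - (t - 1))"
  using assms
proof (induct v)
  case 0 then show ?case by simp
next
  case (Suc v)
  show ?case
  proof (cases "v = 0")
    case True
    have "Qset s i j 1 = {i..<s} \<times> {j..<s}" unfolding Qset_def by auto
    then show ?thesis using True by (simp add: card_cartesian_product)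
  next
    case False
    then have IH: "card (Qset s i j v) \<le> (s - i) * (s - j) + (\<Sum>t=2..v. (s - i) - (t - 1))"
      using Suc by auto
    have vj: "v \<le> j - i" using Suc by simp
    have sub: "Qset s i j (Suc v) \<subseteq> Qset s i j v \<union> ({i + v..<s} \<times> {j - v})"
    proof
      fix p assume "p \<in> Qset s i j (Suc v)"
      then obtain k m u where p: "p = (k, m)" "k < s" "m < s" "u < Suc v" "i + u \<le> k" "j - u \<le> m"
        unfolding Qset_def by auto
      show "p \<in> Qset s i j v \<union> ({i + v..<s} \<times> {j - v})"
      proof (cases "u < v")
        case True then show ?thesis using p unfolding Qset_def by auto
      next
        case F: False
        then have u: "u = v" using p by simp
        show ?thesis
        proof (cases "m = j - v")
          case True then show ?thesis using p u by auto
        next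
          case False
          then have "j - (v - 1) \<le> m" "i + (v - 1) \<le> k" "v - 1 < v" using p u vj \<open>v \<noteq> 0\<close> by auto
          then show ?thesis using p unfolding Qset_def by blast
        qed
      qed
    qed
    have "card (Qset s i j (Suc v)) \<le> card (Qset s i j v \<union> ({i + v..<s} \<times> {j - v}))"
      using sub by (intro card_mono) (auto simp: Qset_def intro: finite_subset[of _ "{..<s} \<times> {..<s}"])
    also have "\<dots> \<le> card (Qset s i j v) + card ({i + v..<s} \<times> {j - v})" by (rule card_Un_le)
    also have "\<dots> \<le> (s - i) * (s - j) + (\<Sum>t=2..v. (s - i) - (t - 1)) + (s - i - v)"
      using IH by (simp add: card_cartesian_product)
    also have "\<dots> = (s - i) * (s - j) + (\<Sum>t=2..Suc v. (s - i) - (t - 1))"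
      using False by (simp add: sum.cl_ivl_Suc)
    finally show ?thesis .
  qed
qed

lemma sum_lin:
  assumes "1 \<le> v" "v - 1 \<le> A"
  shows "(\<Sum>t=2..v. A - (t - 1)) + tri (v - 1) = A * (v - 1)"
  using assms
proof (induct v)
  case 0 then show ?case by simp
next
  case (Suc v)
  show ?case
  proof (cases "v = 0")
    case True then show ?thesis by simp
  next
    case False
    then have IH: "(\<Sum>t=2..v. A - (t - 1)) + tri (v - 1) = A * (v - 1)" using Suc by auto
    obtain w where w: "v = Suc w" using False by (cases v) auto
    have "(\<Sum>t=2..Suc v. A - (t - 1)) = (\<Sum>t=2..v. A - (t - 1)) + (A - v)"
      using False by (simp add: sum.cl_ivl_Suc)
    moreover have "tri v = tri w + v" using w by simp
    moreover have "v \<le> A" using Suc by simp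
    ultimately show ?thesis using IH w by (simp add: algebra_simps)
  qed
qed


definition biorth :: "'p set \<Rightarrow> ('n \<Rightarrow> 'p \<Rightarrow> 'a::field) \<Rightarrow> ('n \<Rightarrow> 'p \<Rightarrow> 'a) \<Rightarrow> 'n set \<Rightarrow> bool" where
  "biorth P X Y A \<longleftrightarrow> (\<forall>M\<in>A. \<forall>N\<in>A. pr P (X M) (Y N) = (if M = N then 1 else 0))"

lemma biorth_inj: "biorth P X Y A \<Longrightarrow> inj_on X A"
  unfolding biorth_def by (rule inj_onI) (metis one_neq_zero)

lemma biorth_mono: "biorth P X Y A \<Longrightarrow> B \<subseteq> A \<Longrightarrow> biorth P X Y B"
  unfolding biorth_def by blast

lemma biorth_repr:
  assumes bo: "biorth P X Y A" and fin: "finite A" and F: "F \<in> VS.span (X ` A)"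
  shows "F = (\<Sum>N\<in>A. vscale (pr P F (Y N)) (X N))"
proof -
  obtain u where u: "F = (\<Sum>x\<in>X ` A. vscale (u x) x)"
    using F VS.span_finite[of "X ` A"] fin by auto
  have inj: "inj_on X A" by (rule biorth_inj[OF bo])
  have F2: "F = (\<Sum>N\<in>A. vscale (u (X N)) (X N))"
    using u sum.reindex[OF inj, of "\<lambda>x. vscale (u x) x"] by simp
  have c: "pr P F (Y M) = u (X M)" if M: "M \<in> A" for M
  proof -
    have "pr P F (Y M) = (\<Sum>N\<in>A. u (X N) * pr P (X N) (Y M))"
      unfolding F2 by (simp add: pr_sum pr_scale)
    also have "\<dots> = (\<Sum>N\<in>A. if N = M then u (X N) else 0)"
      using bo M unfolding biorth_def by (intro sum.cong) auto
    also have "\<dots> = u (X M)" using M fin by simp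
    finally show ?thesis .
  qed
  show ?thesis using F2 c by (metis (no_types, lifting) sum.cong)
qed

lemma biorth_indep:
  assumes bo: "biorth P X Y A" and fin: "finite A"
  shows "VS.independent (X ` A)"
proof (rule VS.independent_if_scalars_zero)
  show "finite (X ` A)" using fin by simp
next
  fix f and x assume s0: "(\<Sum>x\<in>X ` A. vscale (f x) x) = 0" and x: "x \<in> X ` A"
  then obtain M where M: "M \<in> A" "x = X M" by auto
  have inj: "inj_on X A" by (rule biorth_inj[OF bo])
  have "0 = pr P (\<Sum>x\<in>X ` A. vscale (f x) x) (Y M)" using s0 by simp
  also have "\<dots> = (\<Sum>N\<in>A. f (X N) * pr P (X N) (Y M))"
    using sum.reindex[OF inj, of "\<lambda>x. vscale (f x) x"] by (simp add: pr_sum pr_scale)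
  also have "\<dots> = (\<Sum>N\<in>A. if N = M then f (X N) else 0)"
    using bo M unfolding biorth_def by (intro sum.cong) auto
  also have "\<dots> = f x" using M fin by simp
  finally show "f x = 0" by simp
qed

lemma biorth_dim:
  assumes bo: "biorth P X Y A" and fin: "finite A" and B: "B \<subseteq> A"
  shows "VS.dim (VS.span (X ` B)) = card B"
proof -
  have bo': "biorth P X Y B" using biorth_mono[OF bo B] .
  have finB: "finite B" using fin B finite_subset by blast
  have "VS.dim (VS.span (X ` B)) = card (X ` B)"
    using VS.dim_span_eq_card_independent[OF biorth_indep[OF bo' finB]] .
  also have "\<dots> = card B" using card_image[OF biorth_inj[OF bo']] .
  finally show ?thesis .
qed

lemma span_vanish:
  assumes "F \<in> VS.span S" "\<And>G. G \<in> S \<Longrightarrow> G p = 0"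
  shows "F p = 0"
  using assms(1)
proof (induct rule: VS.span_induct_alt)
  case base then show ?case by simp
next
  case (step c x y) then show ?case using assms(2) by (simp add: vscale_def)
qed

context grid begin

definition "Delta' = {..<s} \<times> {..<s}"

lemma Delta'_eq: "Delta s = Delta'" unfolding Delta_def Delta'_def ..

lemma biorth_E: "biorth P E Phi (Delta s)"
  unfolding biorth_def Delta_def using pr_E_Phi by auto

lemma biorth_Phi: "biorth P Phi E (Delta s)"
  unfolding biorth_def Delta_def using pr_E_Phi by (auto simp: pr_comm)

lemma finDelta: "finite (Delta s)" unfolding Delta_def by simp

lemma Phi_xmul:
  assumes "a < s" "b < s"
  shows "xmul (Phi (a, b)) = (if a = 0 then 0 else Phi (a - 1, b)) + vscale (xs a) (Phi (a, b))"
proof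
  fix p
  show "xmul (Phi (a, b)) p = ((if a = 0 then 0 else Phi (a - 1, b)) + vscale (xs a) (Phi (a, b))) p"
  proof (cases "p \<in> P")
    case True
    then have x: "ix (fst p) < s" "xs (ix (fst p)) = fst p" using S1_elem unfolding P_def by auto
    have "fst p * phi xs a (ix (fst p)) = (if a = 0 then 0 else phi xs (a - 1) (ix (fst p))) + xs a * phi xs a (ix (fst p))"
      using phi_mult[OF injx assms(1) x(1)] x(2) by simp
    then have h: "fst p * (phi xs a (ix (fst p)) * phi ys b (iy (snd p))) =
      ((if a = 0 then 0 else phi xs (a - 1) (ix (fst p))) + xs a * phi xs a (ix (fst p))) * phi ys b (iy (snd p))"
      by (metis mult.assoc)
    have "xmul (Phi (a, b)) p = fst p * (phi xs a (ix (fst p)) * phi ys b (iy (snd p)))"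
      using True by (simp add: xmul_def Phi_def)
    also note h
    also have "((if a = 0 then 0 else phi xs (a - 1) (ix (fst p))) + xs a * phi xs a (ix (fst p))) * phi ys b (iy (snd p))
      = ((if a = 0 then 0 else Phi (a - 1, b)) + vscale (xs a) (Phi (a, b))) p"
      using True by (cases "a = 0") (simp_all add: Phi_def vscale_def algebra_simps)
    finally show ?thesis .
  next
    case False then show ?thesis unfolding xmul_def Phi_def vscale_def by auto
  qed
qed

lemma Phi_ymul:
  assumes "a < s" "b < s"
  shows "ymul (Phi (a, b)) = (if b = 0 then 0 else Phi (a, b - 1)) + vscale (ys b) (Phi (a, b))"
proof
  fix p
  show "ymul (Phi (a, b)) p = ((if b = 0 then 0 else Phi (a, b - 1)) + vscale (ys b) (Phi (a, b))) p"
  proof (cases "p \<in> P")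
    case True
    then have y: "iy (snd p) < s" "ys (iy (snd p)) = snd p" using S2_elem unfolding P_def by auto
    have "snd p * phi ys b (iy (snd p)) = (if b = 0 then 0 else phi ys (b - 1) (iy (snd p))) + ys b * phi ys b (iy (snd p))"
      using phi_mult[OF injy assms(2) y(1)] y(2) by simp
    then have h: "snd p * (phi xs a (ix (fst p)) * phi ys b (iy (snd p))) =
      phi xs a (ix (fst p)) * ((if b = 0 then 0 else phi ys (b - 1) (iy (snd p))) + ys b * phi ys b (iy (snd p)))"
      by (metis mult.left_commute)
    have "ymul (Phi (a, b)) p = snd p * (phi xs a (ix (fst p)) * phi ys b (iy (snd p)))"
      using True by (simp add: ymul_def Phi_def)
    also note h
    also have "phi xs a (ix (fst p)) * ((if b = 0 then 0 else phi ys (b - 1) (iy (snd p))) + ys b * phi ys b (iy (snd p)))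
      = ((if b = 0 then 0 else Phi (a, b - 1)) + vscale (ys b) (Phi (a, b))) p"
      using True by (cases "b = 0") (simp_all add: Phi_def vscale_def algebra_simps)
    finally show ?thesis .
  next
    case False then show ?thesis unfolding ymul_def Phi_def vscale_def by auto
  qed
qed

lemma kappa_xshift:
  assumes "a < s" "b < s"
  shows "pr P (xmul F) (Phi (a, b)) = (if a = 0 then 0 else pr P F (Phi (a - 1, b))) + xs a * pr P F (Phi (a, b))"
proof -
  have "pr P (xmul F) (Phi (a, b)) = pr P (xmul (Phi (a, b))) F"
    unfolding xmul_def by (simp add: pr_mult_move pr_comm)
  also have "\<dots> = (if a = 0 then 0 else pr P (Phi (a - 1, b)) F) + xs a * pr P (Phi (a, b)) F"
    unfolding Phi_xmul[OF assms] by (cases "a = 0") (simp_all add: pr_add pr_scale)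
  finally show ?thesis by (simp add: pr_comm)
qed

lemma kappa_yshift:
  assumes "a < s" "b < s"
  shows "pr P (ymul F) (Phi (a, b)) = (if b = 0 then 0 else pr P F (Phi (a, b - 1))) + ys b * pr P F (Phi (a, b))"
proof -
  have "pr P (ymul F) (Phi (a, b)) = pr P (ymul (Phi (a, b))) F"
    unfolding ymul_def by (simp add: pr_mult_move pr_comm)
  also have "\<dots> = (if b = 0 then 0 else pr P (Phi (a, b - 1)) F) + ys b * pr P (Phi (a, b)) F"
    unfolding Phi_ymul[OF assms] by (cases "b = 0") (simp_all add: pr_add pr_scale)
  finally show ?thesis by (simp add: pr_comm)
qed

lemma pi_xshift:
  "pr P (xmul W) (E (a, b)) = pr P W (E (Suc a, b)) + xs a * pr P W (E (a, b))"
proof -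
  have "pr P (xmul W) (E (a, b)) = pr P (xmul (E (a, b))) W"
    unfolding xmul_def by (simp add: pr_mult_move pr_comm)
  also have "\<dots> = pr P (E (Suc a, b)) W + xs a * pr P (E (a, b)) W"
    unfolding E_xmul by (simp add: pr_add pr_scale)
  finally show ?thesis by (simp add: pr_comm)
qed

lemma pi_yshift:
  "pr P (ymul W) (E (a, b)) = pr P W (E (a, Suc b)) + ys b * pr P W (E (a, b))"
proof -
  have "pr P (ymul W) (E (a, b)) = pr P (ymul (E (a, b))) W"
    unfolding ymul_def by (simp add: pr_mult_move pr_comm)
  also have "\<dots> = pr P (E (a, Suc b)) W + ys b * pr P (E (a, b)) W"
    unfolding E_ymul by (simp add: pr_add pr_scale)
  finally show ?thesis by (simp add: pr_comm)
qed

end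

lemma in_span_mono: "x \<in> VS.span A \<Longrightarrow> A \<subseteq> B \<Longrightarrow> x \<in> VS.span B"
  using VS.span_mono by blast

definition "xm1 f = (\<lambda>x. x * f x)"

lemma xm1_span:
  fixes S :: "('a::field \<Rightarrow> 'a) set"
  assumes "f \<in> VS.span S" "\<And>g. g \<in> S \<Longrightarrow> xm1 g \<in> VS.span S'"
  shows "xm1 f \<in> VS.span S'"
  using assms(1)
proof (induct rule: VS.span_induct_alt)
  case base
  show ?case using VS.span_zero[of S'] by (simp add: xm1_def zero_fun_def)
next
  case (step c x y)
  have eq: "xm1 (vscale c x + y) = vscale c (xm1 x) + xm1 y"
    unfolding xm1_def vscale_def by (auto simp: algebra_simps)
  have "vscale c (xm1 x) + xm1 y \<in> VS.span S'"
    using step assms(2) by (intro VS.span_add VS.span_scale) auto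
  then show ?case unfolding eq .
qed

lemma mono_in_gspan:
  fixes xs :: "nat \<Rightarrow> 'a::field"
  shows "(\<lambda>x. x ^ a) \<in> VS.span (gN xs ` {..a})"
proof (induct a)
  case 0
  have "(\<lambda>x::'a. x ^ 0) = gN xs 0" unfolding gN_def by auto
  then show ?case by (auto intro: VS.span_base)
next
  case (Suc a)
  have A: "xm1 (\<lambda>x. x ^ a) \<in> VS.span (gN xs ` {..Suc a})"
  proof (rule xm1_span[OF Suc])
    fix g assume "g \<in> gN xs ` {..a}"
    then obtain a' where a': "a' \<le> a" "g = gN xs a'" by auto
    have "xm1 g = gN xs (Suc a') + vscale (xs a') (gN xs a')"
      unfolding a' xm1_def vscale_def by (auto simp: gN_mult)
    moreover have g1: "gN xs (Suc a') \<in> VS.span (gN xs ` {..Suc a})" and g2: "gN xs a' \<in> VS.span (gN xs ` {..Suc a})"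
      using a' by (auto intro: VS.span_base)
    ultimately show "xm1 g \<in> VS.span (gN xs ` {..Suc a})"
      using VS.span_add[OF g1 VS.span_scale[OF g2]] by (simp only:)
  qed
  moreover have B: "xm1 (\<lambda>x. x ^ a) = (\<lambda>x. x ^ Suc a)" unfolding xm1_def by auto
  show ?case using A unfolding B .
qed

lemma g_in_monospan:
  fixes xs :: "nat \<Rightarrow> 'a::field"
  shows "gN xs a \<in> VS.span ((\<lambda>a' (x::'a). x ^ a') ` {..a})"
proof (induct a)
  case 0
  have "gN xs 0 = (\<lambda>x::'a. x ^ 0)" unfolding gN_def by auto
  then show ?case by (auto intro: VS.span_base)
next
  case (Suc a)
  have "xm1 (gN xs a) \<in> VS.span ((\<lambda>a' x. x ^ a') ` {..Suc a})"
  proof (rule xm1_span[OF Suc])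
    fix g assume "g \<in> (\<lambda>a' (x::'a). x ^ a') ` {..a}"
    then obtain a' where a': "a' \<le> a" "g = (\<lambda>x. x ^ a')" by auto
    have eq: "xm1 g = (\<lambda>x. x ^ Suc a')" unfolding a' xm1_def by auto
    have "(\<lambda>x. x ^ Suc a') \<in> (\<lambda>a' (x::'a). x ^ a') ` {..Suc a}"
      by (rule image_eqI[where x="Suc a'"]) (use a' in auto)
    then show "xm1 g \<in> VS.span ((\<lambda>a' x. x ^ a') ` {..Suc a})"
      unfolding eq by (rule VS.span_base)
  qed
  moreover have "gN xs a \<in> VS.span ((\<lambda>a' x. x ^ a') ` {..Suc a})"
    using Suc by (rule in_span_mono) auto
  ultimately have A: "xm1 (gN xs a) - vscale (xs a) (gN xs a) \<in> VS.span ((\<lambda>a' x. x ^ a') ` {..Suc a})"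
    by (intro VS.span_diff VS.span_scale)
  have B: "xm1 (gN xs a) - vscale (xs a) (gN xs a) = gN xs (Suc a)"
    unfolding xm1_def vscale_def by (auto simp: gN_mult)
  show ?case using A unfolding B .
qed

definition prodf :: "('a \<times> 'a) set \<Rightarrow> ('a \<Rightarrow> 'a::field) \<Rightarrow> ('a \<Rightarrow> 'a) \<Rightarrow> ('a \<times> 'a \<Rightarrow> 'a)" where
  "prodf P f k = (\<lambda>p. if p \<in> P then f (fst p) * k (snd p) else 0)"

lemma prodf_span1:
  assumes "f \<in> VS.span A"
  shows "prodf P f k \<in> VS.span ((\<lambda>(a, b). prodf P a b) ` (A \<times> {k}))"
  using assms
proof (induct rule: VS.span_induct_alt)
  case base
  have "prodf P 0 k = 0" by (simp add: prodf_def fun_eq_iff)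
  then show ?case by (simp only: VS.span_zero)
next
  case (step c x y)
  have eq: "prodf P (vscale c x + y) k = vscale c (prodf P x k) + prodf P y k"
    unfolding prodf_def vscale_def by (auto simp: algebra_simps)
  moreover have h: "prodf P x k \<in> VS.span ((\<lambda>(a, b). prodf P a b) ` (A \<times> {k}))"
    using step by (intro VS.span_base) auto
  show ?case unfolding eq by (rule VS.span_add[OF VS.span_scale[OF h] step(2)])
qed

lemma prodf_span:
  assumes "f \<in> VS.span A" "k \<in> VS.span B"
  shows "prodf P f k \<in> VS.span ((\<lambda>(a, b). prodf P a b) ` (A \<times> B))"
  using assms(2)
proof (induct rule: VS.span_induct_alt)
  case base
  have "prodf P f 0 = 0" by (simp add: prodf_def fun_eq_iff)
  then show ?case by (simp only: VS.span_zero)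
next
  case (step c x y)
  have eq: "prodf P f (vscale c x + y) = vscale c (prodf P f x) + prodf P f y"
    unfolding prodf_def vscale_def by (auto simp: algebra_simps)
  moreover have h: "prodf P f x \<in> VS.span ((\<lambda>(a, b). prodf P a b) ` (A \<times> B))"
    by (rule in_span_mono[OF prodf_span1[OF assms(1), of P x]]) (use step(1) in auto)
  show ?case unfolding eq by (rule VS.span_add[OF VS.span_scale[OF h] step(2)])
qed

context grid begin

lemma E_prodf: "E (a, b) = prodf P (gN xs a) (gN ys b)"
  unfolding E_def prodf_def by auto

lemma evvec_prodf: "evvec P (a, b) = prodf P (\<lambda>x. x ^ a) (\<lambda>y. y ^ b)"
  unfolding evvec_def prodf_def by auto

definition downclosed :: "(nat \<times> nat) set \<Rightarrow> bool" where
  "downclosed L \<longleftrightarrow> (\<forall>a b a' b'. (a, b) \<in> L \<longrightarrow> a' \<le> a \<longrightarrow> b' \<le> b \<longrightarrow> (a', b') \<in> L)"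

lemma evcode_eq:
  assumes dc: "downclosed L"
  shows "evcode P L = VS.span (E ` L)"
  unfolding evcode_def
proof (subst VS.span_eq, intro conjI subsetI)
  fix F assume "F \<in> evvec P ` L"
  then obtain a b where ab: "(a, b) \<in> L" "F = evvec P (a, b)" by auto
  have "F \<in> VS.span ((\<lambda>(f, k). prodf P f k) ` (gN xs ` {..a} \<times> gN ys ` {..b}))"
    unfolding ab evvec_prodf by (intro prodf_span mono_in_gspan)
  moreover have "(\<lambda>(f, k). prodf P f k) ` (gN xs ` {..a} \<times> gN ys ` {..b}) \<subseteq> E ` L"
  proof
    fix G assume "G \<in> (\<lambda>(f, k). prodf P f k) ` (gN xs ` {..a} \<times> gN ys ` {..b})"
    then obtain a' b' where g: "a' \<le> a" "b' \<le> b" "G = prodf P (gN xs a') (gN ys b')" by auto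
    have "(a', b') \<in> L" using dc ab(1) g(1,2) unfolding downclosed_def by blast
    moreover have "G = E (a', b')" using g(3) by (simp add: E_prodf)
    ultimately show "G \<in> E ` L" by blast
  qed
  ultimately show "F \<in> VS.span (E ` L)" by (rule in_span_mono)
next
  fix F assume "F \<in> E ` L"
  then obtain a b where ab: "(a, b) \<in> L" "F = E (a, b)" by auto
  have "F \<in> VS.span ((\<lambda>(f, k). prodf P f k) ` ((\<lambda>a' x. x ^ a') ` {..a} \<times> (\<lambda>a' x. x ^ a') ` {..b}))"
    unfolding ab E_prodf by (intro prodf_span g_in_monospan)
  moreover have "(\<lambda>(f, k). prodf P f k) ` ((\<lambda>a' x. x ^ a') ` {..a} \<times> (\<lambda>a' x. x ^ a') ` {..b}) \<subseteq> evvec P ` L"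
  proof
    fix G assume "G \<in> (\<lambda>(f, k). prodf P f k) ` ((\<lambda>a' x. x ^ a') ` {..a} \<times> (\<lambda>a' x. x ^ a') ` {..b})"
    then obtain a' b' where g: "a' \<le> a" "b' \<le> b" "G = prodf P (\<lambda>x. x ^ a') (\<lambda>x. x ^ b')" by auto
    have "(a', b') \<in> L" using dc ab(1) g(1,2) unfolding downclosed_def by blast
    moreover have "G = evvec P (a', b')" using g(3) by (simp add: evvec_prodf)
    ultimately show "G \<in> evvec P ` L" by blast
  qed
  ultimately show "F \<in> VS.span (evvec P ` L)" by (rule in_span_mono)
qed

end

lemma rank_mono: "a' \<le> a \<Longrightarrow> b' \<le> b \<Longrightarrow> rank (a', b') \<le> rank (a, b)"
proof -
  assume h: "a' \<le> a" "b' \<le> b"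
  show ?thesis
  proof (cases "a' + b' < a + b")
    case True then show ?thesis using rank_lt_sum[of "(a',b')" "(a,b)"] by simp
  next
    case False then have "a' = a" "b' = b" using h by auto
    then show ?thesis by simp
  qed
qed

lemma rank_shift_x: "rank (Suc a, b) < rank (Suc a', b') \<longleftrightarrow> rank (a, b) < rank (a', b')"
  unfolding deglex_rank[symmetric] deglex_less_def by auto

lemma rank_shift_y: "rank (a, Suc b) < rank (a', Suc b') \<longleftrightarrow> rank (a, b) < rank (a', b')"
  unfolding deglex_rank[symmetric] deglex_less_def by auto

locale gridij = grid +
  fixes i j :: nat
  assumes ij: "i \<le> j" and js: "j < s"
begin

definition "L1 = {N \<in> Delta s. deglex_le N (i, j)}"
definition "L2 = {N \<in> Delta s. deglex_less N (j, i)}"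
definition "AD = (\<lambda>b. (i + j - b, b)) ` {i..j}"
definition "C1 = VS.span (E ` L1)"
definition "C2 = VS.span (E ` L2)"

lemma L1_rank: "L1 = {N \<in> Delta s. rank N \<le> rank (i, j)}"
  unfolding L1_def deglex_le_rank ..
lemma L2_rank: "L2 = {N \<in> Delta s. rank N < rank (j, i)}"
  unfolding L2_def deglex_rank ..

lemma rank_ji_ij: "rank (j, i) \<le> rank (i, j)"
  unfolding rank_def using ij by (simp add: add.commute)

lemma L2_sub_L1: "L2 \<subseteq> L1"
  unfolding L1_rank L2_rank using rank_ji_ij by auto

lemma L1_Delta: "L1 \<subseteq> Delta s" unfolding L1_def by auto
lemma L2_Delta: "L2 \<subseteq> Delta s" unfolding L2_def by auto

lemma dc_L1: "downclosed L1"
  unfolding downclosed_def L1_rank Delta_def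
proof (intro allI impI)
  fix a b a' b' assume h: "(a, b) \<in> {N \<in> {..<s} \<times> {..<s}. rank N \<le> rank (i, j)}" "a' \<le> a" "b' \<le> b"
  then have "rank (a', b') \<le> rank (a, b)" by (intro rank_mono)
  then show "(a', b') \<in> {N \<in> {..<s} \<times> {..<s}. rank N \<le> rank (i, j)}" using h by auto
qed

lemma dc_L2: "downclosed L2"
  unfolding downclosed_def L2_rank Delta_def
proof (intro allI impI)
  fix a b a' b' assume h: "(a, b) \<in> {N \<in> {..<s} \<times> {..<s}. rank N < rank (j, i)}" "a' \<le> a" "b' \<le> b"
  then have "rank (a', b') \<le> rank (a, b)" by (intro rank_mono)
  then show "(a', b') \<in> {N \<in> {..<s} \<times> {..<s}. rank N < rank (j, i)}" using h by auto
qed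

lemma AD_eq: "AD = L1 - L2"
proof
  show "AD \<subseteq> L1 - L2"
  proof
    fix N assume "N \<in> AD"
    then obtain b where b: "i \<le> b" "b \<le> j" "N = (i + j - b, b)" unfolding AD_def by auto
    have "rank N = tri (i + j) + b" unfolding rank_def b(3) using b by simp
    moreover have "rank (i, j) = tri (i + j) + j" "rank (j, i) = tri (i + j) + i" unfolding rank_def by (auto simp: add.commute)
    moreover have "N \<in> Delta s" unfolding Delta_def b(3) using b js by auto
    ultimately show "N \<in> L1 - L2" unfolding L1_rank L2_rank using b by auto
  qed
next
  show "L1 - L2 \<subseteq> AD"
  proof
    fix N assume N: "N \<in> L1 - L2"
    obtain a b where ab: "N = (a, b)" by (cases N)
    have r: "rank (j, i) \<le> rank N" "rank N \<le> rank (i, j)" using N unfolding L1_rank L2_rank by auto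
    have "a + b = i + j"
    proof (rule ccontr)
      assume "a + b \<noteq> i + j"
      then have "a + b < j + i \<or> i + j < a + b" by auto
      then show False using rank_lt_sum[of N "(j, i)"] rank_lt_sum[of "(i, j)" N] r ab by auto
    qed
    moreover have "rank N = tri (i + j) + b" unfolding rank_def ab using calculation by simp
    moreover have "rank (i, j) = tri (i + j) + j" "rank (j, i) = tri (i + j) + i" unfolding rank_def by (auto simp: add.commute)
    ultimately have "i \<le> b" "b \<le> j" "a = i + j - b" using r by auto
    then show "N \<in> AD" unfolding AD_def ab by auto
  qed
qed

lemma AD_Delta: "AD \<subseteq> Delta s" using AD_eq L1_Delta by auto

lemma card_AD: "card AD = j - i + 1"
proof -
  have "inj_on (\<lambda>b. (i + j - b, b)) {i..j}" by (rule inj_onI) auto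
  then show ?thesis unfolding AD_def using card_image ij by fastforce
qed

lemma AD_L2: "AD \<inter> L2 = {}" using AD_eq by auto

lemma evcode_L1: "evcode P L1 = C1" unfolding C1_def by (rule evcode_eq[OF dc_L1])
lemma evcode_L2: "evcode P L2 = C2" unfolding C2_def by (rule evcode_eq[OF dc_L2])

lemma finL1: "finite L1" using L1_Delta finDelta finite_subset by blast
lemma finL2: "finite L2" using L2_Delta finDelta finite_subset by blast

lemma dimC1: "VS.dim C1 = card L1" unfolding C1_def by (rule biorth_dim[OF biorth_E finDelta L1_Delta])
lemma dimC2: "VS.dim C2 = card L2" unfolding C2_def by (rule biorth_dim[OF biorth_E finDelta L2_Delta])

lemma codim_eq: "VS.dim C1 - VS.dim C2 = j - i + 1"
proof -
  have "card L1 = card L2 + card AD" using AD_eq L2_sub_L1 finL1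
    by (metis card_Diff_subset finL2 card_mono le_add_diff_inverse)
  then show ?thesis unfolding dimC1 dimC2 card_AD by simp
qed

lemma C2_sub_C1: "C2 \<subset> C1"
proof -
  have "C2 \<subseteq> C1" unfolding C1_def C2_def using L2_sub_L1 by (intro VS.span_mono) auto
  moreover have "C2 \<noteq> C1" using codim_eq by auto
  ultimately show ?thesis by auto
qed

lemma span_pr_zero:
  assumes "F \<in> VS.span (E ` L)" "L \<subseteq> Delta s" "N \<in> Delta s" "N \<notin> L"
  shows "pr P F (Phi N) = 0"
  using assms(1)
proof (rule pr_span_zero)
  fix G assume "G \<in> E ` L"
  then obtain M where "M \<in> L" "G = E M" by auto
  then show "pr P G (Phi N) = 0" using pr_E_Phi[of N M] assms unfolding Delta_def by auto
qed

lemma span_repr: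
  assumes "F \<in> VS.span (E ` L)" "L \<subseteq> Delta s"
  shows "F = (\<Sum>N\<in>L. vscale (pr P F (Phi N)) (E N))"
  using biorth_repr[OF biorth_mono[OF biorth_E assms(2)] _ assms(1)] finite_subset[OF assms(2) finDelta] by blast

lemma span_zero_test:
  assumes "F \<in> VS.span (E ` L)" "L \<subseteq> Delta s" "\<And>N. N \<in> L \<Longrightarrow> pr P F (Phi N) = 0"
  shows "F = 0"
proof -
  have "\<forall>N\<in>L. vscale (pr P F (Phi N)) (E N) = 0" using assms(3) by (simp add: vscale_def zero_fun_def)
  then have "(\<Sum>N\<in>L. vscale (pr P F (Phi N)) (E N)) = 0" by (rule sum.neutral)
  then show ?thesis using span_repr[OF assms(1,2)] by simp
qed

lemma span_restrict:
  assumes "F \<in> VS.span (E ` L)" "L \<subseteq> Delta s" "L' \<subseteq> L" "\<And>N. N \<in> L - L' \<Longrightarrow> pr P F (Phi N) = 0"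
  shows "F \<in> VS.span (E ` L')"
proof -
  have finL: "finite L" using finite_subset[OF assms(2) finDelta] .
  have "F = (\<Sum>N\<in>L. vscale (pr P F (Phi N)) (E N))" by (rule span_repr[OF assms(1,2)])
  also have "\<dots> = (\<Sum>N\<in>L'. vscale (pr P F (Phi N)) (E N))"
    using assms(3,4) finL by (intro sum.mono_neutral_right) (auto simp: vscale_def zero_fun_def)
  also have "\<dots> \<in> VS.span (E ` L')"
    by (intro VS.span_sum VS.span_scale VS.span_base) auto
  finally show ?thesis .
qed

lemma dual_char:
  assumes "L \<subseteq> Delta s"
  shows "W \<in> dual_code P (VS.span (E ` L)) \<longleftrightarrow> (\<forall>p. p \<notin> P \<longrightarrow> W p = 0) \<and> (\<forall>N\<in>L. pr P (E N) W = 0)"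
proof
  assume "W \<in> dual_code P (VS.span (E ` L))"
  then have "\<forall>p. p \<notin> P \<longrightarrow> W p = 0" "\<forall>c\<in>VS.span (E ` L). pr P c W = 0"
    unfolding dual_code_def pr_def by auto
  moreover have "E N \<in> VS.span (E ` L)" if "N \<in> L" for N using that by (intro VS.span_base) auto
  ultimately show "(\<forall>p. p \<notin> P \<longrightarrow> W p = 0) \<and> (\<forall>N\<in>L. pr P (E N) W = 0)" by blast
next
  assume h: "(\<forall>p. p \<notin> P \<longrightarrow> W p = 0) \<and> (\<forall>N\<in>L. pr P (E N) W = 0)"
  have "pr P c W = 0" if "c \<in> VS.span (E ` L)" for c
    using that by (rule pr_span_zero) (use h in auto)
  then show "W \<in> dual_code P (VS.span (E ` L))" unfolding dual_code_def pr_def using h by auto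
qed

end

lemma up_iter:
  assumes cx: "\<And>a b. (a, b) \<in> D \<Longrightarrow> Suc a < s \<Longrightarrow> (Suc a, b) \<in> D"
    and cy: "\<And>a b. (a, b) \<in> D \<Longrightarrow> Suc b < s \<Longrightarrow> (a, Suc b) \<in> D"
    and ab: "(a, b) \<in> D" and k: "a \<le> k" "k < s" and m: "b \<le> m" "m < s"
  shows "(k, m) \<in> D"
proof -
  have kb: "(k, b) \<in> D" using k(1) k
  proof (induct k rule: dec_induct)
    case base show ?case by (rule ab)
  next
    case (step n) then show ?case using cx by auto
  qed
  show ?thesis using m(1) m
  proof (induct m rule: dec_induct)
    case base show ?case by (rule kb)
  next
    case (step n) then show ?case using cy by auto
  qed
qed

lemma down_iter:
  assumes cx: "\<And>a b. (Suc a, b) \<in> D \<Longrightarrow> (a, b) \<in> D"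
    and cy: "\<And>a b. (a, Suc b) \<in> D \<Longrightarrow> (a, b) \<in> D"
    and ab: "(a, b) \<in> D" and k: "k \<le> a" and m: "m \<le> b"
  shows "(k, m) \<in> D"
proof -
  have kb: "(k, b) \<in> D" using k
  proof (induct k rule: inc_induct)
    case base show ?case by (rule ab)
  next
    case (step n) then show ?case using cx by auto
  qed
  show ?thesis using m
  proof (induct m rule: inc_induct)
    case base show ?case by (rule kb)
  next
    case (step n) then show ?case using cy by auto
  qed
qed

lemma pr_zero_right[simp]: "pr P F 0 = 0"
  unfolding pr_def by simp

context gridij begin

definition "r1 N = rank (s, s) - rank N"

lemma rank_Delta: "N \<in> Delta s \<Longrightarrow> rank N < rank (s, s)"
  unfolding Delta_def by (intro rank_lt_sum) auto

lemma r1_less: "N \<in> Delta s \<Longrightarrow> N' \<in> Delta s \<Longrightarrow> r1 N' < r1 N \<longleftrightarrow> rank N < rank N'"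
  unfolding r1_def using rank_Delta[of N] rank_Delta[of N'] by auto

lemma inj_r1: "inj_on r1 (Delta s)"
proof (rule inj_onI)
  fix N N' assume "N \<in> Delta s" "N' \<in> Delta s" "r1 N = r1 N'"
  then have "rank N = rank N'" unfolding r1_def using rank_Delta[of N] rank_Delta[of N'] by auto
  then show "N = N'" using rank_inj by (meson injD)
qed

abbreviation "leadP F N \<equiv> isLead P Phi (Delta s) r1 F N"
abbreviation "leadD W N \<equiv> isLead P E (Delta s) rank W N"

lemma leadP_def': "leadP F N \<longleftrightarrow> N \<in> Delta s \<and> pr P F (Phi N) \<noteq> 0 \<and> (\<forall>N'\<in>Delta s. rank N < rank N' \<longrightarrow> pr P F (Phi N') = 0)"
  unfolding isLead_def by (auto simp: r1_less)

definition "DP T = {N. \<exists>F. (\<forall>p. p \<notin> T \<longrightarrow> F p = 0) \<and> leadP F N}"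
definition "DD T = {N. \<exists>W. (\<forall>p. p \<notin> T \<longrightarrow> W p = 0) \<and> leadD W N}"

lemma DP_x:
  assumes "(a, b) \<in> DP T" "Suc a < s"
  shows "(Suc a, b) \<in> DP T"
proof -
  obtain F where F: "\<forall>p. p \<notin> T \<longrightarrow> F p = 0" "leadP F (a, b)" using assms(1) unfolding DP_def by auto
  have ab: "a < s" "b < s" using F(2) unfolding leadP_def' by (auto simp: Delta_def)
  have D1: "(Suc a, b) \<in> Delta s" using ab assms(2) unfolding Delta_def by auto
  have z1: "pr P F (Phi (Suc a, b)) = 0"
    using F(2) D1 rank_lt_sum[of "(a, b)" "(Suc a, b)"] unfolding leadP_def' by auto
  have "leadP (xmul F) (Suc a, b)"
    unfolding leadP_def'
  proof (intro conjI ballI impI)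
    show "(Suc a, b) \<in> Delta s" by (rule D1)
    show "pr P (xmul F) (Phi (Suc a, b)) \<noteq> 0"
      using kappa_xshift[OF assms(2) ab(2), of F] z1 F(2) unfolding leadP_def' by simp
    fix N' assume N': "N' \<in> Delta s" "rank (Suc a, b) < rank N'"
    obtain c d where cd: "N' = (c, d)" by (cases N')
    have cds: "c < s" "d < s" using N' cd unfolding Delta_def by auto
    have r0: "rank (a, b) < rank N'" using N'(2) rank_lt_sum[of "(a, b)" "(Suc a, b)"] by auto
    have t2: "pr P F (Phi N') = 0" using F(2) N'(1) r0 unfolding leadP_def' by auto
    have t1: "(if c = 0 then 0 else pr P F (Phi (c - 1, d))) = 0"
    proof (cases c)
      case (Suc c')
      have "rank (a, b) < rank (c', d)" using N'(2) unfolding cd Suc rank_shift_x .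
      moreover have "(c', d) \<in> Delta s" using cds Suc unfolding Delta_def by auto
      ultimately show ?thesis using F(2) Suc unfolding leadP_def' by auto
    qed simp
    show "pr P (xmul F) (Phi N') = 0"
      unfolding cd kappa_xshift[OF cds] using t1 t2 cd by simp
  qed
  moreover have "\<forall>p. p \<notin> T \<longrightarrow> xmul F p = 0" using F(1) unfolding xmul_def by auto
  ultimately show ?thesis unfolding DP_def by auto
qed

lemma DP_y:
  assumes "(a, b) \<in> DP T" "Suc b < s"
  shows "(a, Suc b) \<in> DP T"
proof -
  obtain F where F: "\<forall>p. p \<notin> T \<longrightarrow> F p = 0" "leadP F (a, b)" using assms(1) unfolding DP_def by auto
  have ab: "a < s" "b < s" using F(2) unfolding leadP_def' by (auto simp: Delta_def)
  have D1: "(a, Suc b) \<in> Delta s" using ab assms(2) unfolding Delta_def by auto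
  have z1: "pr P F (Phi (a, Suc b)) = 0"
    using F(2) D1 rank_lt_sum[of "(a, b)" "(a, Suc b)"] unfolding leadP_def' by auto
  have "leadP (ymul F) (a, Suc b)"
    unfolding leadP_def'
  proof (intro conjI ballI impI)
    show "(a, Suc b) \<in> Delta s" by (rule D1)
    show "pr P (ymul F) (Phi (a, Suc b)) \<noteq> 0"
      using kappa_yshift[OF ab(1) assms(2), of F] z1 F(2) unfolding leadP_def' by simp
    fix N' assume N': "N' \<in> Delta s" "rank (a, Suc b) < rank N'"
    obtain c d where cd: "N' = (c, d)" by (cases N')
    have cds: "c < s" "d < s" using N' cd unfolding Delta_def by auto
    have r0: "rank (a, b) < rank N'" using N'(2) rank_lt_sum[of "(a, b)" "(a, Suc b)"] by auto
    have t2: "pr P F (Phi N') = 0" using F(2) N'(1) r0 unfolding leadP_def' by auto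
    have t1: "(if d = 0 then 0 else pr P F (Phi (c, d - 1))) = 0"
    proof (cases d)
      case (Suc d')
      have "rank (a, b) < rank (c, d')" using N'(2) unfolding cd Suc rank_shift_y .
      moreover have "(c, d') \<in> Delta s" using cds Suc unfolding Delta_def by auto
      ultimately show ?thesis using F(2) Suc unfolding leadP_def' by auto
    qed simp
    show "pr P (ymul F) (Phi N') = 0"
      unfolding cd kappa_yshift[OF cds] using t1 t2 cd by simp
  qed
  moreover have "\<forall>p. p \<notin> T \<longrightarrow> ymul F p = 0" using F(1) unfolding ymul_def by auto
  ultimately show ?thesis unfolding DP_def by auto
qed

lemma leadD_def': "leadD W N \<longleftrightarrow> N \<in> Delta s \<and> pr P W (E N) \<noteq> 0 \<and> (\<forall>N'\<in>Delta s. rank N' < rank N \<longrightarrow> pr P W (E N') = 0)"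
  unfolding isLead_def by auto

lemma DD_x:
  assumes "(Suc a, b) \<in> DD T"
  shows "(a, b) \<in> DD T"
proof -
  obtain W where W: "\<forall>p. p \<notin> T \<longrightarrow> W p = 0" "leadD W (Suc a, b)" using assms(1) unfolding DD_def by auto
  have ab: "Suc a < s" "b < s" using W(2) unfolding leadD_def' by (auto simp: Delta_def)
  have D1: "(a, b) \<in> Delta s" using ab unfolding Delta_def by auto
  have z1: "pr P W (E (a, b)) = 0"
    using W(2) D1 rank_lt_sum[of "(a, b)" "(Suc a, b)"] unfolding leadD_def' by auto
  have "leadD (xmul W) (a, b)"
    unfolding leadD_def'
  proof (intro conjI ballI impI)
    show "(a, b) \<in> Delta s" by (rule D1)
    show "pr P (xmul W) (E (a, b)) \<noteq> 0"
      using pi_xshift[of W a b] z1 W(2) unfolding leadD_def' by simp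
    fix N' assume N': "N' \<in> Delta s" "rank N' < rank (a, b)"
    obtain c d where cd: "N' = (c, d)" by (cases N')
    have cds: "c < s" "d < s" using N' cd unfolding Delta_def by auto
    have r0: "rank N' < rank (Suc a, b)" using N'(2) rank_lt_sum[of "(a, b)" "(Suc a, b)"] by auto
    have t2: "pr P W (E N') = 0" using W(2) N'(1) r0 unfolding leadD_def' by auto
    have t1: "pr P W (E (Suc c, d)) = 0"
    proof (cases "Suc c < s")
      case True
      have "rank (Suc c, d) < rank (Suc a, b)" using N'(2) unfolding cd rank_shift_x .
      moreover have "(Suc c, d) \<in> Delta s" using cds True unfolding Delta_def by auto
      ultimately show ?thesis using W(2) unfolding leadD_def' by auto
    next
      case False then show ?thesis using E_bigx[of "Suc c" d] by simp
    qed
    show "pr P (xmul W) (E N') = 0"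
      unfolding cd pi_xshift using t1 t2 cd by simp
  qed
  moreover have "\<forall>p. p \<notin> T \<longrightarrow> xmul W p = 0" using W(1) unfolding xmul_def by auto
  ultimately show ?thesis unfolding DD_def by auto
qed

lemma DD_y:
  assumes "(a, Suc b) \<in> DD T"
  shows "(a, b) \<in> DD T"
proof -
  obtain W where W: "\<forall>p. p \<notin> T \<longrightarrow> W p = 0" "leadD W (a, Suc b)" using assms(1) unfolding DD_def by auto
  have ab: "a < s" "Suc b < s" using W(2) unfolding leadD_def' by (auto simp: Delta_def)
  have D1: "(a, b) \<in> Delta s" using ab unfolding Delta_def by auto
  have z1: "pr P W (E (a, b)) = 0"
    using W(2) D1 rank_lt_sum[of "(a, b)" "(a, Suc b)"] unfolding leadD_def' by auto
  have "leadD (ymul W) (a, b)"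
    unfolding leadD_def'
  proof (intro conjI ballI impI)
    show "(a, b) \<in> Delta s" by (rule D1)
    show "pr P (ymul W) (E (a, b)) \<noteq> 0"
      using pi_yshift[of W a b] z1 W(2) unfolding leadD_def' by simp
    fix N' assume N': "N' \<in> Delta s" "rank N' < rank (a, b)"
    obtain c d where cd: "N' = (c, d)" by (cases N')
    have cds: "c < s" "d < s" using N' cd unfolding Delta_def by auto
    have r0: "rank N' < rank (a, Suc b)" using N'(2) rank_lt_sum[of "(a, b)" "(a, Suc b)"] by auto
    have t2: "pr P W (E N') = 0" using W(2) N'(1) r0 unfolding leadD_def' by auto
    have t1: "pr P W (E (c, Suc d)) = 0"
    proof (cases "Suc d < s")
      case True
      have "rank (c, Suc d) < rank (a, Suc b)" using N'(2) unfolding cd rank_shift_y .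
      moreover have "(c, Suc d) \<in> Delta s" using cds True unfolding Delta_def by auto
      ultimately show ?thesis using W(2) unfolding leadD_def' by auto
    next
      case False then show ?thesis using E_bigy[of "Suc d" c] by simp
    qed
    show "pr P (ymul W) (E N') = 0"
      unfolding cd pi_yshift using t1 t2 cd by simp
  qed
  moreover have "\<forall>p. p \<notin> T \<longrightarrow> ymul W p = 0" using W(1) unfolding ymul_def by auto
  ultimately show ?thesis unfolding DD_def by auto
qed

end

lemma RGHW_ge:
  fixes C1 C2 :: "('b::finite \<Rightarrow> 'a::field) set"
  assumes lb: "\<And>U. U \<subseteq> C1 \<Longrightarrow> VS.subspace U \<Longrightarrow> VS.dim U = v \<Longrightarrow> U \<inter> C2 = {0} \<Longrightarrow> b \<le> card (supp U)"
    and ex: "\<exists>U. U \<subseteq> C1 \<and> VS.subspace U \<and> VS.dim U = v \<and> U \<inter> C2 = {0}"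
  shows "b \<le> RGHW v C1 C2"
proof -
  let ?S = "{card (supp U) | U. U \<subseteq> C1 \<and> VS.subspace U \<and> VS.dim U = v \<and> U \<inter> C2 = {0}}"
  have fin: "finite ?S"
  proof (rule finite_subset[of _ "{..card (UNIV :: 'b set)}"])
    show "?S \<subseteq> {..card (UNIV :: 'b set)}" by (auto intro: card_mono)
  qed simp
  have ne: "?S \<noteq> {}" using ex by auto
  have "Min ?S \<in> ?S" using fin ne by (rule Min_in)
  then obtain U where "U \<subseteq> C1" "VS.subspace U" "VS.dim U = v" "U \<inter> C2 = {0}" "Min ?S = card (supp U)" by auto
  then have "b \<le> Min ?S" using lb by auto
  then show ?thesis unfolding RGHW_def .
qed

lemma RGHW_le:
  fixes C1 C2 :: "('b::finite \<Rightarrow> 'a::field) set"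
  assumes "U \<subseteq> C1" "VS.subspace U" "VS.dim U = v" "U \<inter> C2 = {0}"
  shows "RGHW v C1 C2 \<le> card (supp U)"
proof -
  let ?S = "{card (supp U) | U. U \<subseteq> C1 \<and> VS.subspace U \<and> VS.dim U = v \<and> U \<inter> C2 = {0}}"
  have fin: "finite ?S"
  proof (rule finite_subset[of _ "{..card (UNIV :: 'b set)}"])
    show "?S \<subseteq> {..card (UNIV :: 'b set)}" by (auto intro: card_mono)
  qed simp
  have "card (supp U) \<in> ?S" using assms by auto
  then show ?thesis unfolding RGHW_def using fin by (rule Min_le[rotated])
qed

context gridij begin

lemma AD_snd_inj: "inj_on snd AD"
  unfolding AD_def by (rule inj_onI) auto

lemma AD_elem: "N \<in> AD \<Longrightarrow> N = (i + j - snd N, snd N) \<and> i \<le> snd N \<and> snd N \<le> j"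
  unfolding AD_def by auto

lemma finite_supp: "finite (supp (U :: ('a \<times> 'a \<Rightarrow> 'a) set))"
  by (rule finite_subset[OF subset_UNIV]) simp

lemma choose_B:
  assumes "M \<subseteq> AD" "v \<le> card M"
  obtains B where "B \<subseteq> {i..j}" "card B = v" "\<And>b. b \<in> B \<Longrightarrow> (i + j - b, b) \<in> M"
proof -
  obtain M' where M': "M' \<subseteq> M" "card M' = v" using obtain_subset_with_card_n[OF assms(2)] by blast
  have inj: "inj_on snd M'" using AD_snd_inj M' assms(1) inj_on_subset by blast
  have "snd ` M' \<subseteq> {i..j}" using M' assms(1) AD_elem by fastforce
  moreover have "card (snd ` M') = v" using card_image[OF inj] M' by simp
  moreover have "(i + j - b, b) \<in> M" if bB: "b \<in> snd ` M'" for b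
  proof -
    obtain N where N: "N \<in> M'" "b = snd N" using bB by auto
    then have "N = (i + j - b, b)" using AD_elem[of N] M' assms(1) by auto
    then show ?thesis using N M' by auto
  qed
  ultimately show ?thesis using that by blast
qed

lemma primary_lower:
  assumes U1: "U \<subseteq> C1" and sub: "VS.subspace U" and dU: "VS.dim U = v" and U2: "U \<inter> C2 = {0}" and v1: "1 \<le> v"
  shows "(s - i) * (s - j + v - 1) - tri (v - 1) \<le> card (supp U)"
proof -
  define M where "M = {N. \<exists>F\<in>U. leadP F N}"
  have nd: "\<exists>N\<in>Delta s. pr P F (Phi N) \<noteq> 0" if F: "F \<in> U" "F \<noteq> 0" for F
  proof (rule ccontr)
    assume "\<not> (\<exists>N\<in>Delta s. pr P F (Phi N) \<noteq> 0)"
    then have "F = 0" using span_zero_test[of F L1] F U1 L1_Delta unfolding C1_def by auto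
    then show False using F by simp
  qed
  have vM: "v \<le> card M" unfolding M_def using dim_le_leads[OF finDelta inj_r1 sub nd] dU by simp
  have MAD: "M \<subseteq> AD"
  proof
    fix N assume "N \<in> M"
    then obtain F where F: "F \<in> U" "leadP F N" unfolding M_def by auto
    have FC1: "F \<in> VS.span (E ` L1)" using F U1 unfolding C1_def by auto
    have ND: "N \<in> Delta s" "pr P F (Phi N) \<noteq> 0" using F(2) unfolding leadP_def' by auto
    have NL1: "N \<in> L1" using span_pr_zero[OF FC1 L1_Delta ND(1)] ND(2) by auto
    have "N \<notin> L2"
    proof
      assume NL2: "N \<in> L2"
      have "F \<in> VS.span (E ` L2)"
      proof (rule span_restrict[OF FC1 L1_Delta L2_sub_L1])
        fix N' assume N': "N' \<in> L1 - L2"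
        then have "rank (j, i) \<le> rank N'" "N' \<in> Delta s" unfolding L1_rank L2_rank by auto
        moreover have "rank N < rank (j, i)" using NL2 unfolding L2_rank by auto
        ultimately show "pr P F (Phi N') = 0" using F(2) unfolding leadP_def' by auto
      qed
      then have "F \<in> U \<inter> C2" using F unfolding C2_def by auto
      then have "F = 0" using U2 by auto
      then show False using ND(2) by simp
    qed
    then show "N \<in> AD" using NL1 AD_eq by auto
  qed
  define T where "T = supp U"
  have MD: "M \<subseteq> DP T"
  proof
    fix N assume "N \<in> M"
    then obtain F where F: "F \<in> U" "leadP F N" unfolding M_def by auto
    have "\<forall>p. p \<notin> T \<longrightarrow> F p = 0" using F unfolding T_def supp_def by auto
    then show "N \<in> DP T" using F unfolding DP_def by auto
  qed
  obtain B where B: "B \<subseteq> {i..j}" "card B = v" "\<And>b. b \<in> B \<Longrightarrow> (i + j - b, b) \<in> M"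
    using choose_B[OF MAD vM] by blast
  have upD: "upB s (i + j) B \<subseteq> DP T"
  proof
    fix x assume "x \<in> upB s (i + j) B"
    then obtain k m b where x: "x = (k, m)" "k < s" "m < s" "b \<in> B" "i + j \<le> k + b" "b \<le> m"
      unfolding upB_def by auto
    have a1: "(i + j - b, b) \<in> DP T" using B(3)[OF x(4)] MD by auto
    have a2: "i + j - b \<le> k" using x by auto
    have "(k, m) \<in> DP T"
      by (rule up_iter[of "DP T" s "i + j - b" b k m, OF DP_x DP_y a1 a2 x(2) x(6) x(3)]) auto
    then show "x \<in> DP T" unfolding x(1) .
  qed
  have "(s - i) * (s - j + v - 1) - tri (v - 1) \<le> card (upB s (i + j) B)"
    by (rule upB_bound[OF B(1,2) v1 js ij])
  also have "\<dots> \<le> card (DP T)"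
    by (rule card_mono[OF _ upD]) (rule finite_subset[OF _ finDelta], auto simp: DP_def isLead_def)
  also have "\<dots> \<le> card T"
    unfolding DP_def T_def by (rule leads_card_le[OF finite_supp finDelta inj_r1])
  finally show ?thesis unfolding T_def .
qed

end

context gridij begin

lemma dual_lower:
  assumes U1: "U \<subseteq> dual_code P C2" and sub: "VS.subspace U" and dU: "VS.dim U = v"
    and U2: "U \<inter> dual_code P C1 = {0}" and v1: "1 \<le> v"
  shows "(i + v) * (j + 1) - tri (v - 1) \<le> card (supp U)"
proof -
  define M where "M = {N. \<exists>W\<in>U. leadD W N}"
  have Wchar: "(\<forall>p. p \<notin> P \<longrightarrow> W p = 0) \<and> (\<forall>N\<in>L2. pr P W (E N) = 0)" if "W \<in> U" for W
    using U1 that dual_char[OF L2_Delta, of W] unfolding C2_def by (auto simp: pr_comm)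
  have nd1: "\<exists>N\<in>L1. pr P W (E N) \<noteq> 0" if W: "W \<in> U" "W \<noteq> 0" for W
  proof (rule ccontr)
    assume "\<not> (\<exists>N\<in>L1. pr P W (E N) \<noteq> 0)"
    then have "W \<in> dual_code P C1" using dual_char[OF L1_Delta, of W] Wchar[OF W(1)] unfolding C1_def
      by (auto simp: pr_comm)
    then have "W = 0" using U2 W(1) by auto
    then show False using W by simp
  qed
  have nd: "\<exists>N\<in>Delta s. pr P W (E N) \<noteq> 0" if "W \<in> U" "W \<noteq> 0" for W
    using nd1[OF that] L1_Delta by auto
  have vM: "v \<le> card M" unfolding M_def using dim_le_leads[OF finDelta inj_on_subset[OF rank_inj subset_UNIV] sub nd] dU by simp
  have MAD: "M \<subseteq> AD"
  proof
    fix N assume "N \<in> M"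
    then obtain W where W: "W \<in> U" "leadD W N" unfolding M_def by auto
    have ND: "N \<in> Delta s" "pr P W (E N) \<noteq> 0" using W(2) unfolding leadD_def' by auto
    have NL2: "N \<notin> L2" using Wchar[OF W(1)] ND by auto
    have "W \<noteq> 0" using ND(2) by (auto simp: zero_fun_def pr_def)
    then obtain N1 where N1: "N1 \<in> L1" "pr P W (E N1) \<noteq> 0" using nd1[OF W(1)] by blast
    have "rank N \<le> rank N1"
    proof (rule ccontr)
      assume "\<not> rank N \<le> rank N1"
      then show False using W(2) N1 L1_Delta unfolding leadD_def' by auto
    qed
    then have "N \<in> L1" using N1(1) ND(1) unfolding L1_rank by auto
    then show "N \<in> AD" using NL2 AD_eq by auto
  qed
  define T where "T = supp U"
  have MD: "M \<subseteq> DD T"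
  proof
    fix N assume "N \<in> M"
    then obtain W where W: "W \<in> U" "leadD W N" unfolding M_def by auto
    have "\<forall>p. p \<notin> T \<longrightarrow> W p = 0" using W unfolding T_def supp_def by auto
    then show "N \<in> DD T" using W unfolding DD_def by auto
  qed
  obtain B where B: "B \<subseteq> {i..j}" "card B = v" "\<And>b. b \<in> B \<Longrightarrow> (i + j - b, b) \<in> M"
    using choose_B[OF MAD vM] by blast
  have dnD: "downB (i + j) B \<subseteq> DD T"
  proof
    fix x assume "x \<in> downB (i + j) B"
    then obtain k m b where x: "x = (k, m)" "b \<in> B" "k + b \<le> i + j" "m \<le> b"
      unfolding downB_def by auto
    have a1: "(i + j - b, b) \<in> DD T" using B(3)[OF x(2)] MD by auto
    have a2: "k \<le> i + j - b" using x by auto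
    have "(k, m) \<in> DD T"
      by (rule down_iter[of "DD T" "i + j - b" b k m, OF DD_x DD_y a1 a2 x(4)])
    then show "x \<in> DD T" unfolding x(1) .
  qed
  have "(i + v) * (j + 1) - tri (v - 1) \<le> card (downB (i + j) B)"
    by (rule downB_bound[OF B(1,2) v1])
  also have "\<dots> \<le> card (DD T)"
    by (rule card_mono[OF _ dnD]) (rule finite_subset[OF _ finDelta], auto simp: DD_def isLead_def)
  also have "\<dots> \<le> card T"
    unfolding DD_def T_def by (rule leads_card_le[OF finite_supp finDelta inj_on_subset[OF rank_inj subset_UNIV]])
  finally show ?thesis unfolding T_def .
qed

definition "Av v = (\<lambda>b. (i + j - b, b)) ` {j + 1 - v..j}"

lemma Av_AD: "v \<le> j - i + 1 \<Longrightarrow> Av v \<subseteq> AD"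
  unfolding Av_def AD_def using ij by (intro image_mono) auto

lemma card_Av: "v \<le> j - i + 1 \<Longrightarrow> card (Av v) = v"
proof -
  assume v: "v \<le> j - i + 1"
  have "inj_on (\<lambda>b. (i + j - b, b)) {j + 1 - v..j}" by (rule inj_onI) auto
  then show ?thesis unfolding Av_def using card_image v ij by fastforce
qed

lemma Av_Delta: "v \<le> j - i + 1 \<Longrightarrow> Av v \<subseteq> Delta s" using Av_AD AD_Delta by blast

lemma Av_L2: "v \<le> j - i + 1 \<Longrightarrow> Av v \<inter> L2 = {}" using Av_AD AD_L2 by blast

lemma E_nonzero:
  assumes "E (a, b) p \<noteq> 0"
  shows "\<exists>k m. p = (xs k, ys m) \<and> a \<le> k \<and> k < s \<and> b \<le> m \<and> m < s"
proof -
  have pP: "p \<in> P" using assms unfolding E_def by (auto split: if_splits)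
  define k where "k = ix (fst p)"
  define m where "m = iy (snd p)"
  have km: "k < s" "xs k = fst p" "m < s" "ys m = snd p"
    using S1_elem S2_elem pP unfolding k_def m_def P_def by auto
  have nz: "gN xs a (xs k) \<noteq> 0" "gN ys b (ys m) \<noteq> 0" using assms pP km unfolding E_def by auto
  have "a \<le> k" using nz(1) gN_zero[of k a xs] by (meson not_le)
  moreover have "b \<le> m" using nz(2) gN_zero[of m b ys] by (meson not_le)
  ultimately show ?thesis using km by (metis prod.collapse)
qed

lemma primary_construct:
  assumes v1: "1 \<le> v" and vl: "v \<le> j - i + 1"
  shows "\<exists>U. U \<subseteq> C1 \<and> VS.subspace U \<and> VS.dim U = v \<and> U \<inter> C2 = {0} \<and>
    card (supp U) \<le> (s - i) * (s - j) + (\<Sum>t=2..v. (s - i) - (t - 1))"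
proof (intro exI conjI)
  let ?U = "VS.span (E ` Av v)"
  show "?U \<subseteq> C1" unfolding C1_def using Av_AD[OF vl] AD_eq by (intro VS.span_mono) auto
  show "VS.subspace ?U" by simp
  show "VS.dim ?U = v" using biorth_dim[OF biorth_E finDelta Av_Delta[OF vl]] card_Av[OF vl] by simp
  show "?U \<inter> C2 = {0}"
  proof
    show "?U \<inter> C2 \<subseteq> {0}"
    proof
      fix F assume F: "F \<in> ?U \<inter> C2"
      have "F = 0"
      proof (rule span_zero_test[of F L2])
        show "F \<in> VS.span (E ` L2)" using F unfolding C2_def by auto
        show "L2 \<subseteq> Delta s" by (rule L2_Delta)
        fix N assume "N \<in> L2"
        then show "pr P F (Phi N) = 0" using F span_pr_zero[of F "Av v" N] Av_Delta[OF vl] Av_L2[OF vl] L2_Delta by auto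
      qed
      then show "F \<in> {0}" by simp
    qed
    show "{0} \<subseteq> ?U \<inter> C2" unfolding C2_def by (auto intro: VS.span_zero)
  qed
  have suppU: "supp ?U \<subseteq> (\<lambda>(k, m). (xs k, ys m)) ` Qset s i j v"
  proof
    fix p assume "p \<in> supp ?U"
    then obtain F where F: "F \<in> ?U" "F p \<noteq> 0" unfolding supp_def by auto
    obtain G where G: "G \<in> E ` Av v" "G p \<noteq> 0" using span_vanish[OF F(1)] F(2) by blast
    then obtain b where b: "b \<in> {j + 1 - v..j}" "G = E (i + j - b, b)" unfolding Av_def by auto
    obtain k m where km: "p = (xs k, ys m)" "i + j - b \<le> k" "k < s" "b \<le> m" "m < s"
      using E_nonzero[of "i + j - b" b p] G b by auto
    have "(k, m) \<in> Qset s i j v"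
      unfolding Qset_def using km b v1 vl by (auto intro!: exI[of _ "j - b"])
    then show "p \<in> (\<lambda>(k, m). (xs k, ys m)) ` Qset s i j v" using km by force
  qed
  have "card (supp ?U) \<le> card ((\<lambda>(k, m). (xs k, ys m)) ` Qset s i j v)"
    by (rule card_mono[OF _ suppU]) simp
  also have "\<dots> \<le> card (Qset s i j v)"
    by (rule card_image_le, rule finite_subset[of _ "{..<s} \<times> {..<s}"]) (auto simp: Qset_def)
  also have "\<dots> \<le> (s - i) * (s - j) + (\<Sum>t=2..v. (s - i) - (t - 1))"
    by (rule Qset_card[OF v1 vl ij js])
  finally show "card (supp ?U) \<le> (s - i) * (s - j) + (\<Sum>t=2..v. (s - i) - (t - 1))" .
qed

lemma dual_construct:
  assumes v1: "1 \<le> v" and vl: "v \<le> j - i + 1"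
  shows "\<exists>U. U \<subseteq> dual_code P C2 \<and> VS.subspace U \<and> VS.dim U = v \<and> U \<inter> dual_code P C1 = {0}"
proof (intro exI conjI)
  let ?U = "VS.span (Phi ` Av v)"
  show "?U \<subseteq> dual_code P C2"
  proof
    fix W assume W: "W \<in> ?U"
    have "\<forall>p. p \<notin> P \<longrightarrow> W p = 0"
    proof (intro allI impI)
      fix p assume p: "p \<notin> P"
      show "W p = 0" by (rule span_vanish[OF W]) (auto simp: Phi_def p)
    qed
    moreover have "\<forall>N\<in>L2. pr P (E N) W = 0"
    proof
      fix N assume N: "N \<in> L2"
      have "pr P W (E N) = 0"
      proof (rule pr_span_zero[OF W])
        fix G assume "G \<in> Phi ` Av v"
        then obtain M where M: "M \<in> Av v" "G = Phi M" by auto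
        then have "M \<noteq> N" "M \<in> Delta s" using N Av_L2[OF vl] Av_Delta[OF vl] by auto
        then show "pr P G (E N) = 0" using M pr_E_Phi[of M N] unfolding Delta_def by (auto simp: pr_comm)
      qed
      then show "pr P (E N) W = 0" by (simp add: pr_comm)
    qed
    ultimately show "W \<in> dual_code P C2" unfolding C2_def using dual_char[OF L2_Delta] by auto
  qed
  show "VS.subspace ?U" by simp
  show "VS.dim ?U = v" using biorth_dim[OF biorth_Phi finDelta Av_Delta[OF vl]] card_Av[OF vl] by simp
  show "?U \<inter> dual_code P C1 = {0}"
  proof
    show "?U \<inter> dual_code P C1 \<subseteq> {0}"
    proof
      fix W assume W: "W \<in> ?U \<inter> dual_code P C1"
      have finA: "finite (Av v)" using Av_Delta[OF vl] finDelta finite_subset by blast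
      have rep: "W = (\<Sum>N\<in>Av v. vscale (pr P W (E N)) (Phi N))"
        using biorth_repr[OF biorth_mono[OF biorth_Phi Av_Delta[OF vl]] finA] W by auto
      have "\<forall>N\<in>L1. pr P (E N) W = 0" using W dual_char[OF L1_Delta] unfolding C1_def by auto
      then have "\<forall>N\<in>Av v. vscale (pr P W (E N)) (Phi N) = 0"
        using Av_AD[OF vl] AD_eq by (auto simp: pr_comm vscale_def zero_fun_def)
      then have "(\<Sum>N\<in>Av v. vscale (pr P W (E N)) (Phi N)) = 0" by (rule sum.neutral)
      then show "W \<in> {0}" using rep by simp
    qed
    show "{0} \<subseteq> ?U \<inter> dual_code P C1"
      unfolding C1_def using dual_char[OF L1_Delta, of 0] by (auto intro: VS.span_zero simp: pr_def)
  qed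
qed

end

context gridij begin

lemma prim_formula:
  assumes v1: "1 \<le> v" and vl: "v \<le> j - i + 1"
  shows "(s - i) * (s - j) + (\<Sum>t=2..v. (s - i) - (t - 1)) = (s - i) * (s - j + v - 1) - tri (v - 1)"
    and "tri (v - 1) \<le> (s - i) * (s - j + v - 1)"
proof -
  have sl: "(\<Sum>t=2..v. (s - i) - (t - 1)) + tri (v - 1) = (s - i) * (v - 1)"
    by (rule sum_lin[OF v1]) (use vl js in auto)
  have e: "(s - i) * (s - j + v - 1) = (s - i) * (s - j) + (s - i) * (v - 1)"
  proof -
    obtain w where w: "v = Suc w" using v1 by (cases v) auto
    have "s - j + v - 1 = (s - j) + w" using w js by simp
    then show ?thesis using w by (simp only: distrib_left diff_Suc_1)
  qed
  show "(s - i) * (s - j) + (\<Sum>t=2..v. (s - i) - (t - 1)) = (s - i) * (s - j + v - 1) - tri (v - 1)"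
    using sl e by linarith
  show "tri (v - 1) \<le> (s - i) * (s - j + v - 1)" using sl e by linarith
qed

lemma dual_formula:
  assumes v1: "1 \<le> v" and vl: "v \<le> j - i + 1"
  shows "(i + 1) * (j + 1) + (\<Sum>t=2..v. (j + 1) - (t - 1)) = (i + v) * (j + 1) - tri (v - 1)"
    and "tri (v - 1) \<le> (i + v) * (j + 1)"
proof -
  have sl: "(\<Sum>t=2..v. (j + 1) - (t - 1)) + tri (v - 1) = (j + 1) * (v - 1)"
    by (rule sum_lin[OF v1]) (use vl in auto)
  have e: "(i + v) * (j + 1) = (i + 1) * (j + 1) + (j + 1) * (v - 1)"
  proof -
    obtain w where w: "v = Suc w" using v1 by (cases v) auto
    show ?thesis unfolding w by (simp add: algebra_simps)
  qed
  show "(i + 1) * (j + 1) + (\<Sum>t=2..v. (j + 1) - (t - 1)) = (i + v) * (j + 1) - tri (v - 1)"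
    using sl e by linarith
  show "tri (v - 1) \<le> (i + v) * (j + 1)" using sl e by linarith
qed

lemma prim_RGHW:
  assumes v1: "1 \<le> v" and vl: "v \<le> j - i + 1"
  shows "RGHW v C1 C2 = (s - i) * (s - j) + (\<Sum>t=2..v. (s - i) - (t - 1))"
proof (rule antisym)
  obtain U where U: "U \<subseteq> C1" "VS.subspace U" "VS.dim U = v" "U \<inter> C2 = {0}"
    "card (supp U) \<le> (s - i) * (s - j) + (\<Sum>t=2..v. (s - i) - (t - 1))"
    using primary_construct[OF v1 vl] by blast
  show "RGHW v C1 C2 \<le> (s - i) * (s - j) + (\<Sum>t=2..v. (s - i) - (t - 1))"
    using RGHW_le[OF U(1-4)] U(5) by linarith
  show "(s - i) * (s - j) + (\<Sum>t=2..v. (s - i) - (t - 1)) \<le> RGHW v C1 C2"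
    unfolding prim_formula(1)[OF v1 vl]
    by (rule RGHW_ge) (use primary_lower v1 U(1-4) in blast)+
qed

lemma dual_RGHW:
  assumes v1: "1 \<le> v" and vl: "v \<le> j - i + 1"
  shows "(i + v) * (j + 1) - tri (v - 1) \<le> RGHW v (dual_code P C2) (dual_code P C1)"
  by (rule RGHW_ge) (use dual_lower v1 dual_construct[OF v1 vl] in blast)+

end

theorem mainTheorem5:
  fixes S1 S2 :: "'a::{finite,field} set" and s i j :: nat
  assumes "card S1 = s" and "card S2 = s" and "i \<le> j" and "j < s"
  defines "L1 \<equiv> {N \<in> Delta s. deglex_le N (i, j)}"
      and "L2 \<equiv> {N \<in> Delta s. deglex_less N (j, i)}"
      and "P \<equiv> S1 \<times> S2"
      and "l \<equiv> j - i + 1"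
  shows "card P = s ^ 2
    \<and> evcode P L2 \<subset> evcode P L1
    \<and> codim (evcode P L1) (evcode P L2) = l
    \<and> RGHW 1 (evcode P L1) (evcode P L2) = (s - i) * (s - j)
    \<and> RGHW 1 (dual_code P (evcode P L2)) (dual_code P (evcode P L1)) \<ge> (i + 1) * (j + 1)
    \<and> (\<forall>v\<in>{2..l}.
         RGHW v (evcode P L1) (evcode P L2) = (s - i) * (s - j) + (\<Sum>t=2..v. (s - i) - (t - 1))
       \<and> int (RGHW v (evcode P L1) (evcode P L2))
           = int (s - i) * int (s - j + v - 1) - int (v * (v - 1) div 2)
       \<and> RGHW v (dual_code P (evcode P L2)) (dual_code P (evcode P L1))
           \<ge> (i + 1) * (j + 1) + (\<Sum>t=2..v. (j + 1) - (t - 1))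
       \<and> int (RGHW v (dual_code P (evcode P L2)) (dual_code P (evcode P L1)))
           \<ge> int (i + v) * int (j + 1) - int (v * (v - 1) div 2))"
proof -
  have f1: "finite S1" "finite S2" by simp_all
  obtain xs where xs: "bij_betw xs {..<s} S1"
    using ex_bij_betw_nat_finite[OF f1(1)] assms(1) by (auto simp: atLeast0LessThan)
  obtain ys where ys: "bij_betw ys {..<s} S2"
    using ex_bij_betw_nat_finite[OF f1(2)] assms(2) by (auto simp: atLeast0LessThan)
  interpret G: gridij S1 S2 s xs ys i j
    by unfold_locales (use xs ys assms(3,4) in auto)
  have PP: "P = G.P" unfolding P_def G.P_def ..
  have L1: "L1 = G.L1" unfolding L1_def G.L1_def ..
  have L2: "L2 = G.L2" unfolding L2_def G.L2_def ..
  have C1: "evcode P L1 = G.C1" unfolding PP L1 by (rule G.evcode_L1)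
  have C2: "evcode P L2 = G.C2" unfolding PP L2 by (rule G.evcode_L2)
  have tv: "v * (v - 1) div 2 = tri (v - 1)" for v
  proof (cases v)
    case 0 then show ?thesis by simp
  next
    case (Suc w) then show ?thesis by (simp add: tri_formula mult.commute)
  qed
  have part1: "card P = s ^ 2" unfolding P_def using assms(1,2) by (simp add: card_cartesian_product power2_eq_square)
  have part2: "evcode P L2 \<subset> evcode P L1" unfolding C1 C2 by (rule G.C2_sub_C1)
  have part3: "codim (evcode P L1) (evcode P L2) = l" unfolding codim_def C1 C2 l_def by (rule G.codim_eq)
  have prim: "RGHW v (evcode P L1) (evcode P L2) = (s - i) * (s - j) + (\<Sum>t=2..v. (s - i) - (t - 1))"
    if "1 \<le> v" "v \<le> l" for v
    unfolding C1 C2 using G.prim_RGHW[OF that(1)] that(2) unfolding l_def by simp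
  have dual: "(i + v) * (j + 1) - tri (v - 1) \<le> RGHW v (dual_code P (evcode P L2)) (dual_code P (evcode P L1))"
    if "1 \<le> v" "v \<le> l" for v
    unfolding C1 unfolding C2 unfolding PP using G.dual_RGHW[OF that(1)] that(2) unfolding l_def by simp
  have part4: "RGHW 1 (evcode P L1) (evcode P L2) = (s - i) * (s - j)"
    using prim[of 1] unfolding l_def by simp
  have part5: "RGHW 1 (dual_code P (evcode P L2)) (dual_code P (evcode P L1)) \<ge> (i + 1) * (j + 1)"
    using dual[of 1] unfolding l_def by simp
  have part6: "RGHW v (evcode P L1) (evcode P L2) = (s - i) * (s - j) + (\<Sum>t=2..v. (s - i) - (t - 1))
       \<and> int (RGHW v (evcode P L1) (evcode P L2))
           = int (s - i) * int (s - j + v - 1) - int (v * (v - 1) div 2)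
       \<and> RGHW v (dual_code P (evcode P L2)) (dual_code P (evcode P L1))
           \<ge> (i + 1) * (j + 1) + (\<Sum>t=2..v. (j + 1) - (t - 1))
       \<and> int (RGHW v (dual_code P (evcode P L2)) (dual_code P (evcode P L1)))
           \<ge> int (i + v) * int (j + 1) - int (v * (v - 1) div 2)" if v: "v \<in> {2..l}" for v
  proof -
    have v1: "1 \<le> v" and vl: "v \<le> j - i + 1" using v unfolding l_def by auto
    have a: "RGHW v (evcode P L1) (evcode P L2) = (s - i) * (s - j) + (\<Sum>t=2..v. (s - i) - (t - 1))"
      using prim[OF v1] vl unfolding l_def by simp
    have b: "int (RGHW v (evcode P L1) (evcode P L2)) = int (s - i) * int (s - j + v - 1) - int (v * (v - 1) div 2)"
      unfolding a G.prim_formula(1)[OF v1 vl] tv using G.prim_formula(2)[OF v1 vl] by (simp add: of_nat_diff)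
    have c0: "(i + v) * (j + 1) - tri (v - 1) \<le> RGHW v (dual_code P (evcode P L2)) (dual_code P (evcode P L1))"
      using dual[OF v1] vl unfolding l_def by simp
    have c: "RGHW v (dual_code P (evcode P L2)) (dual_code P (evcode P L1)) \<ge> (i + 1) * (j + 1) + (\<Sum>t=2..v. (j + 1) - (t - 1))"
      unfolding G.dual_formula(1)[OF v1 vl] by (rule c0)
    have d: "int (RGHW v (dual_code P (evcode P L2)) (dual_code P (evcode P L1))) \<ge> int (i + v) * int (j + 1) - int (v * (v - 1) div 2)"
    proof -
      let ?R = "RGHW v (dual_code P (evcode P L2)) (dual_code P (evcode P L1))"
      have "(i + v) * (j + 1) \<le> ?R + tri (v - 1)" using c0 G.dual_formula(2)[OF v1 vl] by linarith
      then have "int ((i + v) * (j + 1)) \<le> int ?R + int (tri (v - 1))" by linarith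
      then show ?thesis unfolding tv by (simp add: algebra_simps)
    qed
    show ?thesis using a b c d by blast
  qed
  have part6': "\<forall>v\<in>{2..l}. RGHW v (evcode P L1) (evcode P L2) = (s - i) * (s - j) + (\<Sum>t=2..v. (s - i) - (t - 1))
       \<and> int (RGHW v (evcode P L1) (evcode P L2))
           = int (s - i) * int (s - j + v - 1) - int (v * (v - 1) div 2)
       \<and> RGHW v (dual_code P (evcode P L2)) (dual_code P (evcode P L1))
           \<ge> (i + 1) * (j + 1) + (\<Sum>t=2..v. (j + 1) - (t - 1))
       \<and> int (RGHW v (dual_code P (evcode P L2)) (dual_code P (evcode P L1)))
           \<ge> int (i + v) * int (j + 1) - int (v * (v - 1) div 2)"
    by (rule ballI) (rule part6)
  show ?thesis
    by (rule conjI[OF part1 conjI[OF part2 conjI[OF part3 conjI[OF part4 conjI[OF part5 part6']]]]])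
qed


end
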